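(* For every permutation $w$, $c_w(\beta)=c_{w^{-1}}(\beta)$.
   Context: For $w\in S_n$, $\mathfrak{G}^{(\beta)}_w$ is the $\beta$-Grothendieck polynomial: $\mathfrak{G}^{(\beta)}_{w_0}=x_1^{n-1}\cdots x_{n-1}$ for $w_0=n\cdots21$, and $\mathfrak{G}^{(\beta)}_w=\partial_i((1+\beta x_{i+1})\mathfrak{G}^{(\beta)}_{ws_i})$ when $w(i)<w(i+1)$, with $\partial_if=(f-s_if)/(x_i-x_{i+1})$. $\Upsilon_w(\beta)=\mathfrak{G}^{(\beta)}_w(1,\dots,1)$, $\Upsilon_\emptyset=1$. $c_w(\beta)=\sum_{\emptyset\le v\le w}(-1)^{|w|-|v|}\Upsilon_{\mathrm{perm}(v)}(\beta)$, the sum over all subwords $v$ of $w$ (one per subset of positions), where $\mathrm{perm}(v)$ is the permutation order-isomorphic to $v$ and $|v|$ is the length. *)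

theory Defs
  imports Complex_Main "HOL-Library.Poly_Mapping"
begin

type_synonym mpoly = "(nat \<Rightarrow>\<^sub>0 nat) \<Rightarrow>\<^sub>0 real"

definition Xv :: "nat \<Rightarrow> mpoly" where
  "Xv i = Poly_Mapping.single (Poly_Mapping.single i 1) 1"

definition swp :: "nat \<Rightarrow> nat \<Rightarrow> nat" where
  "swp i k = (if k = i then Suc i else if k = Suc i then i else k)"

definition sact :: "nat \<Rightarrow> mpoly \<Rightarrow> mpoly" where
  "sact i f = Poly_Mapping.map_key (\<lambda>e. Poly_Mapping.map_key (swp i) e) f"

definition ddiff :: "nat \<Rightarrow> mpoly \<Rightarrow> mpoly" where
  "ddiff i f = (THE g. (Xv i - Xv (Suc i)) * g = f - sact i f)"

definition piop :: "real \<Rightarrow> nat \<Rightarrow> mpoly \<Rightarrow> mpoly" where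
  "piop \<beta> i f = ddiff i ((1 + Poly_Mapping.single 0 \<beta> * Xv (Suc i)) * f)"

text \<open>Evaluation at x = (1,1,...,1): the sum of all coefficients.\<close>
definition eval_ones :: "mpoly \<Rightarrow> real" where
  "eval_ones f = (\<Sum>e\<in>Poly_Mapping.keys f. Poly_Mapping.lookup f e)"

text \<open>Permutations in one-line notation as lists w = [w(1),...,w(n)].
  Paper position i (1-based) is list index i-1.\<close>

definition has_ascent :: "nat list \<Rightarrow> bool" where
  "has_ascent w = (\<exists>i. Suc i < length w \<and> w ! i < w ! Suc i)"

definition first_ascent :: "nat list \<Rightarrow> nat" where
  "first_ascent w = (LEAST i. Suc i < length w \<and> w ! i < w ! Suc i)"

definition swap_pos :: "nat list \<Rightarrow> nat \<Rightarrow> nat list" where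
  "swap_pos w i = w[i := w ! Suc i, Suc i := w ! i]"

definition groth_top :: "nat \<Rightarrow> mpoly" where
  "groth_top n = (\<Prod>i\<in>{1..<n}. Xv i ^ (n - i))"

text \<open>Recursion G_w = pi_i G_(w s_i) for an ascent i (we use the first one,
  well-definedness being a standard fact), with G_(w0) = x_1^(n-1)...x_(n-1).
  The fuel argument k only serves termination: each step strictly increases the
  number of inversions, so fuel length(w)^2 is never exhausted.\<close>
fun groth_aux :: "nat \<Rightarrow> real \<Rightarrow> nat list \<Rightarrow> mpoly" where
  "groth_aux 0 \<beta> w = groth_top (length w)"
| "groth_aux (Suc k) \<beta> w =
     (if has_ascent w
      then piop \<beta> (Suc (first_ascent w)) (groth_aux k \<beta> (swap_pos w (first_ascent w)))
      else groth_top (length w))"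

definition groth :: "real \<Rightarrow> nat list \<Rightarrow> mpoly" where
  "groth \<beta> w = groth_aux (length w * length w) \<beta> w"

definition Upsilon :: "real \<Rightarrow> nat list \<Rightarrow> real" where
  "Upsilon \<beta> w = (if w = [] then 1 else eval_ones (groth \<beta> w))"

definition std :: "nat list \<Rightarrow> nat list" where
  "std v = map (\<lambda>x. card {y \<in> set v. y \<le> x}) v"

definition cw :: "real \<Rightarrow> nat list \<Rightarrow> real" where
  "cw \<beta> w = (\<Sum>S\<in>Pow {..<length w}.
      (-1) ^ (length w - card S) * Upsilon \<beta> (std (nths w S)))"

definition is_perm :: "nat list \<Rightarrow> bool" where
  "is_perm w = (distinct w \<and> set w = {1..length w})"

definition perm_inv :: "nat list \<Rightarrow> nat list" where
  "perm_inv w = map (\<lambda>k. Suc (LEAST j. j < length w \<and> w ! j = k)) [1..<Suc (length w)]"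

end

theory Submission
  imports Defs
begin


definition desc :: "nat list \<Rightarrow> nat \<Rightarrow> bool" where
  "desc w j = (Suc j < length w \<and> w ! Suc j < w ! j)"

lemma length_swap[simp]: "length (swap_pos w i) = length w"
  by (simp add: swap_pos_def)

lemma nth_swap: "Suc i < length w \<Longrightarrow> k < length w \<Longrightarrow>
  swap_pos w i ! k = (if k = i then w ! Suc i else if k = Suc i then w ! i else w ! k)"
  by (auto simp: swap_pos_def nth_list_update)

lemma swap_swap[simp]: "Suc i < length w \<Longrightarrow> swap_pos (swap_pos w i) i = w"
  by (rule nth_equalityI) (auto simp: nth_swap)

lemma distinct_swap_pos[simp]: "Suc i < length w \<Longrightarrow> distinct (swap_pos w i) = distinct w"
  unfolding swap_pos_def by (rule distinct_swap) auto

lemma set_swap_pos[simp]: "Suc i < length w \<Longrightarrow> set (swap_pos w i) = set w"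
  unfolding swap_pos_def by (rule set_swap) auto

lemma desc_swap_self: "Suc i < length w \<Longrightarrow> desc (swap_pos w i) i = (w ! i < w ! Suc i)"
  by (simp add: desc_def nth_swap)

lemma swap_far_comm: "Suc j < k \<or> Suc k < j \<Longrightarrow> swap_pos (swap_pos w j) k = swap_pos (swap_pos w k) j"
  by (cases "Suc j < length w"; cases "Suc k < length w")
     (auto simp: swap_pos_def nth_list_update list_update_swap)

lemma desc_far: "Suc j < k \<or> Suc k < j \<Longrightarrow> Suc j < length w \<Longrightarrow> desc (swap_pos w j) k = desc w k"
  by (auto simp: desc_def nth_swap)

definition ru :: "'a::comm_ring_1 \<Rightarrow> nat \<Rightarrow> (nat list \<Rightarrow> 'a) \<Rightarrow> nat list \<Rightarrow> 'a" where
  "ru b j M w = (if distinct w \<and> desc w j then M (swap_pos w j) + b * M w else 0)"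

definition rh :: "'a::comm_ring_1 \<Rightarrow> nat \<Rightarrow> 'a \<Rightarrow> (nat list \<Rightarrow> 'a) \<Rightarrow> nat list \<Rightarrow> 'a" where
  "rh b j z M = (\<lambda>w. M w + z * ru b j M w)"

definition kop :: "'a::comm_ring_1 \<Rightarrow> nat \<Rightarrow> 'a \<Rightarrow> 'a \<Rightarrow> (nat list \<Rightarrow> 'a) \<Rightarrow> nat list \<Rightarrow> 'a" where
  "kop b j x y M = (\<lambda>w. (1 + b * x) * M w - (x - y) * ru b j M w)"

lemma ru_lin: "ru b j (\<lambda>v. f v + c * g v) w = ru b j f w + c * ru b j g w"
  by (simp add: ru_def algebra_simps)

lemma ru_add: "ru b j (\<lambda>v. f v + g v) w = ru b j f w + ru b j g w"
  by (simp add: ru_def algebra_simps)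

lemma ru_diff: "ru b j (\<lambda>v. f v - g v) w = ru b j f w - ru b j g w"
  by (simp add: ru_def algebra_simps)

lemma ru_smult: "ru b j (\<lambda>v. c * g v) w = c * ru b j g w"
  by (simp add: ru_def algebra_simps)

lemma ru_cong: "(\<And>v. f v = g v) \<Longrightarrow> ru b j f w = ru b j g w"
  by (simp add: ru_def)

lemma ru_sq: "ru b j (ru b j M) w = b * ru b j M w"
  by (auto simp: ru_def desc_swap_self desc_def algebra_simps nth_swap)

lemma ru_far: "Suc j < k \<or> Suc k < j \<Longrightarrow> ru b j (ru b k M) w = ru b k (ru b j M) w"
  apply (simp add: ru_def)
  apply (cases "Suc j < length w"; cases "Suc k < length w")
  apply (auto simp: desc_far swap_far_comm algebra_simps)
  apply (auto simp: desc_def)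
  done

definition L3 :: "nat list \<Rightarrow> nat \<Rightarrow> nat \<Rightarrow> nat \<Rightarrow> nat \<Rightarrow> nat list" where
  "L3 v j a c d = v[j := a, Suc j := c, Suc (Suc j) := d]"

lemma L3_len[simp]: "length (L3 v j a c d) = length v"
  by (simp add: L3_def)

lemma L3_swap0: "Suc (Suc j) < length v \<Longrightarrow> swap_pos (L3 v j a c d) j = L3 v j c a d"
  by (rule nth_equalityI) (auto simp: nth_swap L3_def nth_list_update)

lemma L3_swap1: "Suc (Suc j) < length v \<Longrightarrow> swap_pos (L3 v j a c d) (Suc j) = L3 v j a d c"
  by (rule nth_equalityI) (auto simp: nth_swap L3_def nth_list_update)

lemma L3_desc0: "Suc (Suc j) < length v \<Longrightarrow> desc (L3 v j a c d) j = (c < a)"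
  by (auto simp: desc_def L3_def nth_list_update)

lemma L3_desc1: "Suc (Suc j) < length v \<Longrightarrow> desc (L3 v j a c d) (Suc j) = (d < c)"
  by (auto simp: desc_def L3_def nth_list_update)

lemma L3_dist0: "Suc (Suc j) < length v \<Longrightarrow> distinct (L3 v j c a d) = distinct (L3 v j a c d)"
  by (metis L3_swap0 L3_len distinct_swap_pos Suc_lessD)

lemma L3_dist1: "Suc (Suc j) < length v \<Longrightarrow> distinct (L3 v j a d c) = distinct (L3 v j a c d)"
  by (metis L3_swap1 L3_len distinct_swap_pos)

lemma L3_distinct_vals: assumes "Suc (Suc j) < length v" "distinct (L3 v j a c d)" 
  shows "a \<noteq> c \<and> a \<noteq> d \<and> c \<noteq> d"
proof -
  have "L3 v j a c d ! j = a" "L3 v j a c d ! Suc j = c" "L3 v j a c d ! Suc (Suc j) = d"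
    using assms(1) by (auto simp: L3_def nth_list_update)
  then show ?thesis using assms nth_eq_iff_index_eq[OF assms(2), of j "Suc j"]
    nth_eq_iff_index_eq[OF assms(2), of j "Suc (Suc j)"] nth_eq_iff_index_eq[OF assms(2), of "Suc j" "Suc (Suc j)"]
    by auto
qed

lemma braid_L3:
  assumes "Suc (Suc j) < length v"
  shows "ru b j (ru b (Suc j) (ru b j M)) (L3 v j a c d) = ru b (Suc j) (ru b j (ru b (Suc j) M)) (L3 v j a c d)"
proof (cases "distinct (L3 v j a c d)")
  case True
  then have "a \<noteq> c" "a \<noteq> d" "c \<noteq> d" using L3_distinct_vals assms by auto
  have d1: "distinct (L3 v j c a d)" using True L3_dist0[OF assms, of c a d] by simp
  have d2: "distinct (L3 v j a d c)" using True L3_dist1[OF assms, of a d c] by simp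
  have d3: "distinct (L3 v j c d a)" using d1 L3_dist1[OF assms, of c d a] by simp
  have d4: "distinct (L3 v j d a c)" using d2 L3_dist0[OF assms, of d a c] by simp
  have d5: "distinct (L3 v j d c a)" using d4 L3_dist1[OF assms, of d c a] by simp
  show ?thesis using True assms d1 d2 d3 d4 d5 \<open>a \<noteq> c\<close> \<open>a \<noteq> d\<close> \<open>c \<noteq> d\<close>
    apply (simp add: ru_def L3_swap0 L3_swap1 L3_desc0 L3_desc1)
    by (cases "a < c"; cases "a < d"; cases "c < d"; simp add: algebra_simps)
next
  case False
  have d1: "\<not> distinct (L3 v j c a d)" using False L3_dist0[OF assms, of c a d] by simp
  have d2: "\<not> distinct (L3 v j a d c)" using False L3_dist1[OF assms, of a d c] by simp
  have d3: "\<not> distinct (L3 v j c d a)" using d1 L3_dist1[OF assms, of c d a] by simp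
  have d4: "\<not> distinct (L3 v j d a c)" using d2 L3_dist0[OF assms, of d a c] by simp
  have d5: "\<not> distinct (L3 v j d c a)" using d4 L3_dist1[OF assms, of d c a] by simp
  show ?thesis using assms False by (simp add: ru_def)
qed

lemma braid: "ru b (Suc j) (ru b j (ru b (Suc j) M)) w = ru b j (ru b (Suc j) (ru b j M)) w"
proof (cases "Suc (Suc j) < length w")
  case True
  have "w = L3 w j (w ! j) (w ! Suc j) (w ! Suc (Suc j))"
    by (simp add: L3_def)
  then show ?thesis using braid_L3[OF True] by metis
next
  case False
  then show ?thesis by (auto simp: ru_def desc_def)
qed

lemma R3: "kop b j x y (rh b j x M) w = (1 + b * x) * rh b j y M w"
  by (simp add: kop_def rh_def ru_lin ru_diff ru_smult ru_sq algebra_simps)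

lemma R2: "kop b j x y (rh b (Suc j) y (rh b j x M)) w = rh b (Suc j) x (rh b j y (kop b (Suc j) x y M)) w"
  by (simp add: kop_def rh_def ru_lin ru_add ru_diff ru_smult ru_sq braid algebra_simps)


lemma swp_swp[simp]: "swp i (swp i k) = k"
  by (simp add: swp_def)

lemma inj_swp: "inj (swp i)"
  by (metis injI swp_swp)

definition sig :: "nat \<Rightarrow> (nat \<Rightarrow>\<^sub>0 nat) \<Rightarrow> (nat \<Rightarrow>\<^sub>0 nat)" where
  "sig i e = Poly_Mapping.map_key (swp i) e"

lemma lookup_sig: "Poly_Mapping.lookup (sig i e) k = Poly_Mapping.lookup e (swp i k)"
  by (simp add: sig_def map_key.rep_eq[OF inj_swp])

lemma sig_sig[simp]: "sig i (sig i e) = e"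
  by (rule poly_mapping_eqI) (simp add: lookup_sig)

lemma inj_sig: "inj (sig i)"
  by (metis injI sig_sig)

lemma bij_sig: "bij (sig i)"
  by (metis bij_betw_def inj_sig sig_sig surj_def)

lemma sig_add: "sig i (a + c) = sig i a + sig i c"
  by (rule poly_mapping_eqI) (simp add: lookup_sig lookup_add)

lemma sact_sig: "sact i f = Poly_Mapping.map_key (sig i) f"
  by (simp add: sact_def sig_def[abs_def])

lemma lookup_sact: "Poly_Mapping.lookup (sact i f) k = Poly_Mapping.lookup f (sig i k)"
  by (simp add: sact_sig map_key.rep_eq[OF inj_sig])

lemma sact_add: "sact i (f + g) = sact i f + sact i g"
  by (rule poly_mapping_eqI) (simp add: lookup_sact lookup_add)

lemma sact_diff: "sact i (f - g) = sact i f - sact i g"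
  by (rule poly_mapping_eqI) (simp add: lookup_sact lookup_minus)

lemma sact_zero: "sact i 0 = 0"
  by (rule poly_mapping_eqI) (simp add: lookup_sact)

lemma sig_zero[simp]: "sig i 0 = 0"
  by (rule poly_mapping_eqI) (simp add: lookup_sig)

lemma sact_single: "sact i (Poly_Mapping.single e c) = Poly_Mapping.single (sig i e) c"
  by (rule poly_mapping_eqI) (auto simp: lookup_sact lookup_single when_def)

lemma sact_one: "sact i 1 = 1"
  by (metis sact_single sig_zero single_one)

lemma sig_eq_iff2: "(sig i k = sig i l + q) = (k = l + sig i q)"
  by (metis sig_add sig_sig)

lemma sig_eq_iff: "(sig i k = sig i l + sig i q) = (k = l + q)"
  by (metis sig_add sig_sig)

lemma sact_mult: "sact i (f * g) = sact i f * sact i g"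
proof (rule poly_mapping_eqI)
  fix k
  let ?s = "sig i"
  have "Poly_Mapping.lookup (sact i f * sact i g) k =
     (\<Sum>l. Poly_Mapping.lookup f (?s l) * (\<Sum>q. Poly_Mapping.lookup g (?s q) when k = l + q))"
    by (simp add: lookup_mult lookup_sact)
  also have "\<dots> = (\<Sum>l. Poly_Mapping.lookup f (?s l) * (\<Sum>q. Poly_Mapping.lookup g q when ?s k = ?s l + q))"
  proof -
    have "(\<Sum>q. Poly_Mapping.lookup g (?s q) when k = l + q) = (\<Sum>q. Poly_Mapping.lookup g q when ?s k = ?s l + q)" for l
      by (rule Sum_any.reindex_cong[OF bij_sig[of i]]) (auto simp: fun_eq_iff sig_eq_iff2)
    then show ?thesis by simp
  qed
  also have "\<dots> = (\<Sum>l. Poly_Mapping.lookup f l * (\<Sum>q. Poly_Mapping.lookup g q when ?s k = l + q))"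
    by (rule Sum_any.reindex_cong[OF bij_sig[of i]]) (auto simp: fun_eq_iff)
  also have "\<dots> = Poly_Mapping.lookup (sact i (f * g)) k"
    by (simp add: lookup_mult lookup_sact)
  finally show "Poly_Mapping.lookup (sact i (f * g)) k = Poly_Mapping.lookup (sact i f * sact i g) k" ..
qed

lemma sig_single: "sig i (Poly_Mapping.single k v) = Poly_Mapping.single (swp i k) v"
  by (rule poly_mapping_eqI) (simp add: lookup_sig lookup_single when_def, metis swp_swp)

lemma sact_Xv: "sact i (Xv k) = Xv (swp i k)"
  by (simp add: Xv_def sact_single sig_single)

lemma sact_const: "sact i (Poly_Mapping.single 0 c) = Poly_Mapping.single 0 c"
  by (simp add: sact_single)

lemma eval_ones_Sum_any: "eval_ones f = (\<Sum>e. Poly_Mapping.lookup f e)"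
  unfolding eval_ones_def
  by (rule Sum_any.expand_superset[symmetric]) (auto simp: in_keys_iff)

lemma eval_ones_add: "eval_ones (f + g) = eval_ones f + eval_ones g"
  unfolding eval_ones_Sum_any lookup_add
  by (rule Sum_any.distrib) (auto simp flip: in_keys_iff)

lemma eval_ones_single: "eval_ones (Poly_Mapping.single e c) = c"
  by (simp add: eval_ones_Sum_any lookup_single)

lemma eval_ones_zero: "eval_ones 0 = 0"
  by (simp add: eval_ones_def)

lemma update_as_add: "k \<notin> Poly_Mapping.keys f \<Longrightarrow> Poly_Mapping.update k v f = f + Poly_Mapping.single k v"
  by (rule poly_mapping_eqI) (auto simp: lookup_update lookup_add lookup_single when_def in_keys_iff)

lemma eval_ones_single_mult: "eval_ones (Poly_Mapping.single e c * g) = c * eval_ones g"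
proof (induction g rule: update_induct)
  case const
  then show ?case by (simp add: eval_ones_zero)
next
  case (update a b f)
  then show ?case
    by (simp add: update_as_add distrib_left eval_ones_add mult_single eval_ones_single)
qed

lemma eval_ones_mult: "eval_ones (f * g) = eval_ones f * eval_ones g"
proof (induction f rule: update_induct)
  case const
  then show ?case by (simp add: eval_ones_zero)
next
  case (update a b f)
  then show ?case
    by (simp add: update_as_add distrib_right eval_ones_add eval_ones_single_mult eval_ones_single)
qed

lemma eval_ones_Xv: "eval_ones (Xv k) = 1"
  by (simp add: Xv_def eval_ones_single)

lemma eval_ones_one: "eval_ones 1 = 1"
  by (metis eval_ones_single single_one)

lemma eval_ones_diff: "eval_ones (f - g) = eval_ones f - eval_ones g"
  by (metis add_diff_cancel eval_ones_add diff_add_cancel eq_diff_eq)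

lemma Xv_inj: "Xv i = Xv k \<Longrightarrow> i = k"
  unfolding Xv_def by (metis lookup_single_eq lookup_single_not_eq one_neq_zero)

lemma Xv_diff_nz: "Xv i - Xv (Suc i) \<noteq> 0"
  using Xv_inj[of i "Suc i"] by auto

lemma ddiff_eq: "(Xv i - Xv (Suc i)) * g = f - sact i f \<Longrightarrow> ddiff i f = g"
  unfolding ddiff_def
proof (rule the_equality)
  fix h assume a: "(Xv i - Xv (Suc i)) * g = f - sact i f" "(Xv i - Xv (Suc i)) * h = f - sact i f"
  then have "(Xv i - Xv (Suc i)) * h = (Xv i - Xv (Suc i)) * g" by simp
  then show "h = g" using Xv_diff_nz[of i] by simp
qed


definition rw :: "'a::comm_ring_1 \<Rightarrow> (nat \<times> 'a) list \<Rightarrow> (nat list \<Rightarrow> 'a) \<Rightarrow> nat list \<Rightarrow> 'a" where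
  "rw b ws M = foldl (\<lambda>N (j, z). rh b j z N) M ws"

lemma rw_Nil[simp]: "rw b [] M = M" by (simp add: rw_def)
lemma rw_Cons[simp]: "rw b ((j,z) # ws) M = rw b ws (rh b j z M)" by (simp add: rw_def)
lemma rw_append: "rw b (xs @ ys) M = rw b ys (rw b xs M)" by (simp add: rw_def)
lemma rw_snoc: "rw b (xs @ [(j,z)]) M = rh b j z (rw b xs M)" by (simp add: rw_def)

definition ch :: "'a \<Rightarrow> nat \<Rightarrow> nat \<Rightarrow> (nat \<times> 'a) list" where
  "ch z lo hi = map (\<lambda>j. (j, z)) (rev [lo..<hi])"

lemma ch_empty[simp]: "hi \<le> lo \<Longrightarrow> ch z lo hi = []" by (simp add: ch_def)

lemma ch_split: "lo < hi \<Longrightarrow> ch z lo hi = ch z (Suc lo) hi @ [(lo, z)]"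
  by (simp add: ch_def upt_rec)

lemma set_ch: "set (ch z lo hi) = (\<lambda>j. (j, z)) ` {lo..<hi}"
  by (auto simp: ch_def)

lemma rh_smult: "rh b j z (\<lambda>w. c * M w) = (\<lambda>w. c * rh b j z M w)"
  by (simp add: rh_def ru_smult algebra_simps)

lemma rw_smult: "rw b ws (\<lambda>w. c * M w) = (\<lambda>w. c * rw b ws M w)"
  by (induction ws arbitrary: M) (auto simp: rh_smult)

definition far :: "nat \<Rightarrow> nat \<Rightarrow> bool" where "far j k = (Suc j < k \<or> Suc k < j)"

lemma rh_far: "far j k \<Longrightarrow> rh b j z (rh b k y M) = rh b k y (rh b j z M)"
  by (rule ext) (simp add: rh_def ru_lin ru_far[of j k] far_def algebra_simps)

lemma kop_far: "far j k \<Longrightarrow> kop b j x y (rh b k z M) = rh b k z (kop b j x y M)"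
  apply (rule ext)
  apply (simp only: rh_def kop_def ru_lin ru_diff ru_smult)
  apply (simp add: ru_far[of j k] far_def algebra_simps)
  done

lemma rw_far: "(\<forall>(k,y)\<in>set ws. far j k) \<Longrightarrow> rh b j z (rw b ws M) = rw b ws (rh b j z M)"
  by (induction ws arbitrary: M) (auto simp: rh_far)

lemma rw_kop_far: "(\<forall>(k,y)\<in>set ws. far j k) \<Longrightarrow> kop b j x y (rw b ws M) = rw b ws (kop b j x y M)"
  by (induction ws arbitrary: M) (auto simp: kop_far)

lemma S_lemma:
  "kop b p x y (rw b (ch y (Suc p) (Suc p + m)) (rw b (ch x p (Suc p + m)) M))
   = (\<lambda>w. (1 + b * x) * rw b (ch x (Suc p) (Suc p + m)) (rw b (ch y p (Suc p + m)) M) w)"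
proof (induction m arbitrary: p M)
  case 0
  show ?case by (rule ext) (simp add: ch_split rw_snoc R3)
next
  case (Suc m)
  define hi where "hi = Suc p + Suc m"
  have hi2: "hi = Suc (Suc p) + m" by (simp add: hi_def)
  have farx: "\<forall>(k,z)\<in>set (ch u (Suc (Suc p)) hi). far p k" for u :: 'a
    by (auto simp: set_ch far_def)
  have e1: "ch u p hi = ch u (Suc (Suc p)) hi @ [(Suc p, u)] @ [(p, u)]" for u :: 'a
    using ch_split[of p hi u] ch_split[of "Suc p" hi u] by (simp add: hi_def)
  have e2: "ch u (Suc p) hi = ch u (Suc (Suc p)) hi @ [(Suc p, u)]" for u :: 'a
    using ch_split[of "Suc p" hi u] by (simp add: hi_def)
  let ?Y = "ch y (Suc (Suc p)) hi" and ?X = "ch x (Suc (Suc p)) hi"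
  have IH: "kop b (Suc p) x y (rw b ?Y (rw b (ch x (Suc p) hi) N))
     = (\<lambda>w. (1 + b * x) * rw b ?X (rw b (ch y (Suc p) hi) N) w)" for N
    using Suc.IH[of "Suc p" N] by (simp add: hi2)
  have "kop b p x y (rw b (ch y (Suc p) hi) (rw b (ch x p hi) M))
      = kop b p x y (rh b (Suc p) y (rw b ?Y (rh b p x (rh b (Suc p) x (rw b ?X M)))))"
    by (simp add: e1 e2 rw_append rw_snoc)
  also have "\<dots> = kop b p x y (rh b (Suc p) y (rh b p x (rw b ?Y (rh b (Suc p) x (rw b ?X M)))))"
    by (simp add: rw_far[OF farx])
  also have "\<dots> = rh b (Suc p) x (rh b p y (kop b (Suc p) x y (rw b ?Y (rh b (Suc p) x (rw b ?X M)))))"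
    by (rule ext) (simp add: R2)
  also have "\<dots> = rh b (Suc p) x (rh b p y (kop b (Suc p) x y (rw b ?Y (rw b (ch x (Suc p) hi) M))))"
    by (simp add: e2 rw_append rw_snoc)
  also have "\<dots> = rh b (Suc p) x (rh b p y (\<lambda>w. (1 + b * x) * rw b ?X (rw b (ch y (Suc p) hi) M) w))"
    by (simp add: IH)
  also have "\<dots> = (\<lambda>w. (1 + b * x) * rh b (Suc p) x (rh b p y (rw b ?X (rw b (ch y (Suc p) hi) M))) w)"
    by (simp add: rh_smult)
  also have "\<dots> = (\<lambda>w. (1 + b * x) * rh b (Suc p) x (rw b ?X (rh b p y (rw b (ch y (Suc p) hi) M))) w)"
    by (simp add: rw_far[OF farx])
  also have "\<dots> = (\<lambda>w. (1 + b * x) * rw b (ch x (Suc p) hi) (rw b (ch y p hi) M) w)"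
    by (simp add: e1 e2 rw_append rw_snoc)
  finally show ?case by (simp add: hi_def)
qed


definition stair :: "nat \<Rightarrow> (nat \<Rightarrow> 'a) \<Rightarrow> nat list \<Rightarrow> (nat \<times> 'a) list" where
  "stair n zs qs = concat (map (\<lambda>q. ch (zs q) q (n - 1)) qs)"

definition eind :: "nat \<Rightarrow> nat list \<Rightarrow> 'a::comm_ring_1" where
  "eind n w = (if w = [1..<Suc n] then 1 else 0)"

definition Fm :: "'a::comm_ring_1 \<Rightarrow> nat \<Rightarrow> (nat \<Rightarrow> 'a) \<Rightarrow> nat list \<Rightarrow> 'a" where
  "Fm b n zs = rw b (stair n zs [0..<n]) (eind n)"

lemma stair_append: "stair n zs (xs @ ys) = stair n zs xs @ stair n zs ys"
  by (simp add: stair_def)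

lemma stair_single: "stair n zs [q] = ch (zs q) q (n - 1)"
  by (simp add: stair_def)

lemma stair_Cons: "stair n zs (q # qs) = ch (zs q) q (n - 1) @ stair n zs qs"
  by (simp add: stair_def)

lemma stair_cong: "(\<forall>q\<in>set qs. zs q = zs' q) \<Longrightarrow> stair n zs qs = stair n zs' qs"
  by (induction qs) (auto simp: stair_def)

lemma stair_far: "\<forall>q\<in>set qs. Suc (Suc p) \<le> q \<Longrightarrow> \<forall>(k,y)\<in>set (stair n zs qs). far p k"
  by (auto simp: stair_def set_ch far_def)

definition swz :: "nat \<Rightarrow> (nat \<Rightarrow> 'a) \<Rightarrow> nat \<Rightarrow> 'a" where
  "swz p zs = (\<lambda>q. if q = p then zs (Suc p) else if q = Suc p then zs p else zs q)"

lemma swz_p[simp]: "swz p zs p = zs (Suc p)" and swz_Sp[simp]: "swz p zs (Suc p) = zs p"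
  by (auto simp: swz_def)

lemma upt_split3: "Suc (Suc p) \<le> n \<Longrightarrow> [0..<n] = [0..<p] @ [p] @ [Suc p] @ [Suc (Suc p)..<n]"
proof -
  assume a: "Suc (Suc p) \<le> n"
  have "[0..<n] = [0..<p] @ [p..<n]" using upt_add_eq_append[of 0 p "n - p"] a by simp
  moreover have "[p..<n] = p # Suc p # [Suc (Suc p)..<n]" using a by (simp add: upt_rec)
  ultimately show ?thesis by simp
qed

lemma FK:
  assumes "Suc (Suc p) \<le> n"
  shows "kop b p (zs p) (zs (Suc p)) (Fm b n zs) = (\<lambda>w. (1 + b * zs p) * Fm b n (swz p zs) w)"
proof -
  define m where "m = n - 2 - p"
  have nm: "n - Suc 0 = Suc (p + m)" using assms by (simp add: m_def)
  let ?x = "zs p" and ?y = "zs (Suc p)"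
  let ?T = "stair n zs [Suc (Suc p)..<n]" and ?H = "rw b (stair n zs [0..<p]) (eind n)"
  have farT: "\<forall>(k,y)\<in>set ?T. far p k" by (rule stair_far) auto
  have T': "stair n (swz p zs) [Suc (Suc p)..<n] = ?T" by (rule stair_cong) (auto simp: swz_def)
  have H': "stair n (swz p zs) [0..<p] = stair n zs [0..<p]" by (rule stair_cong) (auto simp: swz_def)
  have "Fm b n zs = rw b ?T (rw b (ch ?y (Suc p) (Suc p + m)) (rw b (ch ?x p (Suc p + m)) ?H))"
    unfolding Fm_def by (subst upt_split3[OF assms]) (simp add: stair_append rw_append stair_Cons nm)
  moreover have "Fm b n (swz p zs) = rw b ?T (rw b (ch ?x (Suc p) (Suc p + m)) (rw b (ch ?y p (Suc p + m)) ?H))"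
    unfolding Fm_def by (subst upt_split3[OF assms]) (simp add: stair_append rw_append stair_Cons nm T' H')
  ultimately show ?thesis
    using S_lemma[of b p "zs p" "zs (Suc p)" m] by (simp add: rw_kop_far[OF farT] rw_smult)
qed

lemma ru_hom:
  assumes "\<And>a c. \<phi> (a + c) = \<phi> a + \<phi> c" "\<And>a c. \<phi> (a * c) = \<phi> a * \<phi> c" "\<phi> 0 = 0"
  shows "\<phi> (ru b j M w) = ru (\<phi> b) j (\<lambda>v. \<phi> (M v)) w"
  by (simp add: ru_def assms)

lemma rh_hom:
  assumes "\<And>a c. \<phi> (a + c) = \<phi> a + \<phi> c" "\<And>a c. \<phi> (a * c) = \<phi> a * \<phi> c" "\<phi> 0 = 0"
  shows "\<phi> (rh b j z M w) = rh (\<phi> b) j (\<phi> z) (\<lambda>v. \<phi> (M v)) w"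
  by (simp add: rh_def assms ru_hom[of \<phi>])

lemma rw_hom:
  assumes "\<And>a c. \<phi> (a + c) = \<phi> a + \<phi> c" "\<And>a c. \<phi> (a * c) = \<phi> a * \<phi> c" "\<phi> 0 = 0"
  shows "\<phi> (rw b ws M w) = rw (\<phi> b) (map (\<lambda>(j,z). (j, \<phi> z)) ws) (\<lambda>v. \<phi> (M v)) w"
proof (induction ws arbitrary: M)
  case Nil
  then show ?case by simp
next
  case (Cons a ws)
  obtain j z where a: "a = (j, z)" by fastforce
  have e: "(\<lambda>v. \<phi> (rh b j z M v)) = rh (\<phi> b) j (\<phi> z) (\<lambda>v. \<phi> (M v))"
    by (rule ext) (rule rh_hom[OF assms])
  show ?case using Cons[of "rh b j z M"] by (simp add: a e)
qed

lemma map_stair: "map (\<lambda>(j,z). (j, \<phi> z)) (stair n zs qs) = stair n (\<lambda>q. \<phi> (zs q)) qs"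
  by (induction qs) (auto simp: stair_def ch_def)

lemma Fm_hom:
  assumes "\<And>a c. \<phi> (a + c) = \<phi> a + \<phi> c" "\<And>a c. \<phi> (a * c) = \<phi> a * \<phi> c" "\<phi> 0 = 0" "\<phi> 1 = 1"
  shows "\<phi> (Fm b n zs w) = Fm (\<phi> b) n (\<lambda>q. \<phi> (zs q)) w"
proof -
  have "(\<lambda>v. \<phi> (eind n v)) = eind n" by (rule ext) (simp add: eind_def assms)
  then show ?thesis unfolding Fm_def by (simp add: rw_hom[OF assms(1-3)] map_stair)
qed

definition BB :: "real \<Rightarrow> mpoly" where "BB \<beta> = Poly_Mapping.single 0 \<beta>"

definition Fx :: "real \<Rightarrow> nat \<Rightarrow> nat list \<Rightarrow> mpoly" where
  "Fx \<beta> n = Fm (BB \<beta>) n (\<lambda>q. Xv (Suc q))"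

lemma sact_Fx: "sact (Suc p) (Fx \<beta> n w) = Fm (BB \<beta>) n (swz p (\<lambda>q. Xv (Suc q))) w"
proof -
  have "sact (Suc p) (Fx \<beta> n w) = Fm (sact (Suc p) (BB \<beta>)) n (\<lambda>q. sact (Suc p) (Xv (Suc q))) w"
    unfolding Fx_def by (rule Fm_hom) (auto simp: sact_add sact_mult sact_zero sact_one)
  also have "(\<lambda>q. sact (Suc p) (Xv (Suc q))) = swz p (\<lambda>q. Xv (Suc q))"
    by (rule ext) (auto simp: sact_Xv swz_def swp_def)
  finally show ?thesis by (simp add: BB_def sact_const)
qed

lemma piop_Fx:
  assumes "Suc (Suc p) \<le> n" "distinct w" "desc w p"
  shows "piop \<beta> (Suc p) (Fx \<beta> n w) = Fx \<beta> n (swap_pos w p)"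
proof -
  let ?B = "BB \<beta>" and ?x = "Xv (Suc p)" and ?y = "Xv (Suc (Suc p))"
  let ?F = "Fx \<beta> n" and ?F' = "Fm (BB \<beta>) n (swz p (\<lambda>q. Xv (Suc q)))"
  have k: "(1 + ?B * ?x) * ?F w - (?x - ?y) * (?F (swap_pos w p) + ?B * ?F w) = (1 + ?B * ?x) * ?F' w"
    using fun_cong[OF FK[OF assms(1), of ?B "\<lambda>q. Xv (Suc q)"], of w] assms(2,3)
    by (simp add: kop_def ru_def Fx_def)
  have s: "sact (Suc p) ((1 + ?B * ?y) * ?F w) = (1 + ?B * ?x) * ?F' w"
    by (simp add: sact_mult sact_add sact_one sact_Xv sact_Fx BB_def sact_const swp_def)
  show ?thesis unfolding piop_def
  proof (rule ddiff_eq)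
    show "(Xv (Suc p) - Xv (Suc (Suc p))) * ?F (swap_pos w p) = (1 + Poly_Mapping.single 0 \<beta> * ?y) * ?F w - sact (Suc p) ((1 + Poly_Mapping.single 0 \<beta> * ?y) * ?F w)"
      using s k unfolding BB_def by (simp add: algebra_simps)
  qed
qed


declare upt_Suc[simp del]

definition invs :: "nat list \<Rightarrow> (nat \<times> nat) set" where
  "invs w = {(i,j). i < j \<and> j < length w \<and> w ! j < w ! i}"

definition ninv :: "nat list \<Rightarrow> nat" where "ninv w = card (invs w)"

lemma invs_sub: "invs w \<subseteq> {(i,j). i < j \<and> j < length w}"
  by (auto simp: invs_def)

lemma finite_pairs: "finite {(i,j). i < j \<and> j < (n::nat)}"
  by (rule finite_subset[of _ "{..<n} \<times> {..<n}"]) auto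

lemma finite_invs: "finite (invs w)"
  using finite_subset[OF invs_sub finite_pairs] .

lemma ninv_le: "ninv w \<le> card {(i,j). i < j \<and> j < length w}"
  unfolding ninv_def by (rule card_mono[OF finite_pairs invs_sub])

lemma nth_swap_swp: "Suc p < length w \<Longrightarrow> k < length w \<Longrightarrow> swap_pos w p ! k = w ! swp p k"
  by (simp add: nth_swap swp_def)

lemma swp_lt: "Suc p < length w \<Longrightarrow> i < j \<Longrightarrow> (i, j) \<noteq> (p, Suc p) \<Longrightarrow> swp p i < swp p j"
  by (auto simp: swp_def)

lemma swp_less_len: "Suc p < n \<Longrightarrow> k < n \<Longrightarrow> swp p k < n"
  by (auto simp: swp_def)

lemma ninv_swap_asc:
  assumes "Suc p < length w" "w ! p < w ! Suc p"
  shows "ninv (swap_pos w p) = Suc (ninv w)"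
proof -
  define g where "g = (\<lambda>(i,j). (swp p i, swp p j))"
  have gg: "g (g x) = x" for x by (cases x) (simp add: g_def)
  have injg: "inj g" by (metis gg injI)
  have notin: "(p, Suc p) \<notin> g ` invs w"
  proof
    assume "(p, Suc p) \<in> g ` invs w"
    then obtain i j where "(i,j) \<in> invs w" "g (i,j) = (p, Suc p)" by auto
    then show False by (auto simp: g_def swp_def invs_def split: if_splits)
  qed
  have eq: "invs (swap_pos w p) = insert (p, Suc p) (g ` invs w)"
  proof (intro equalityI subsetI)
    fix x assume x: "x \<in> invs (swap_pos w p)"
    obtain i j where xij: "x = (i,j)" by fastforce
    show "x \<in> insert (p, Suc p) (g ` invs w)"
    proof (cases "(i,j) = (p, Suc p)")
      case True then show ?thesis using xij by simp
    next
      case False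
      have ij: "i < j" "j < length w" "swap_pos w p ! j < swap_pos w p ! i" using x xij by (auto simp: invs_def)
      have "(swp p i, swp p j) \<in> invs w"
        using ij swp_lt[OF assms(1) ij(1) False] swp_less_len[OF assms(1)]
        by (auto simp: invs_def nth_swap_swp[OF assms(1)])
      moreover have "g (swp p i, swp p j) = (i, j)" by (simp add: g_def)
      ultimately show ?thesis using xij by (metis image_eqI insertI2)
    qed
  next
    fix x assume x: "x \<in> insert (p, Suc p) (g ` invs w)"
    show "x \<in> invs (swap_pos w p)"
    proof (cases "x = (p, Suc p)")
      case True then show ?thesis using assms by (simp add: invs_def nth_swap)
    next
      case False
      then obtain i j where ij: "(i,j) \<in> invs w" "x = g (i,j)" using x by auto
      have ij2: "i < j" "j < length w" "w ! j < w ! i" using ij by (auto simp: invs_def)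
      have ne: "(i, j) \<noteq> (p, Suc p)" using ij2 assms(2) by auto
      have "swp p i < swp p j" using swp_lt[OF assms(1) ij2(1) ne] .
      then show ?thesis using ij ij2 swp_less_len[OF assms(1)] assms(1)
        by (auto simp: invs_def g_def nth_swap_swp)
    qed
  qed
  have "card (g ` invs w) = card (invs w)" by (rule card_image) (meson injg inj_on_subset subset_UNIV)
  then show ?thesis unfolding ninv_def eq using notin finite_invs by simp
qed

definition TOP :: "(nat list \<Rightarrow> 'a::comm_ring_1) \<Rightarrow> nat list \<Rightarrow> 'a \<Rightarrow> bool" where
  "TOP M L c = ((\<forall>w. ninv L < ninv w \<longrightarrow> M w = 0) \<and> (\<forall>w. ninv w = ninv L \<longrightarrow> M w = (if w = L then c else 0)) \<and> distinct L)"

lemma TOP_step: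
  assumes T: "TOP M L c" and p: "Suc p < length L" "L ! p < L ! Suc p"
  shows "TOP (rh b p z M) (swap_pos L p) (z * c)"
proof -
  have nL: "ninv (swap_pos L p) = Suc (ninv L)" by (rule ninv_swap_asc[OF p])
  have dL: "distinct L" using T by (simp add: TOP_def)
  have M0: "M w = 0" if "ninv L < ninv w" for w using T that by (simp add: TOP_def)
  have M1: "M w = (if w = L then c else 0)" if "ninv w = ninv L" for w using T that by (simp add: TOP_def)
  have dsL: "distinct (swap_pos L p) \<and> desc (swap_pos L p) p"
    using dL p by (simp add: desc_def nth_swap)
  have main: "rh b p z M w = (if ninv (swap_pos L p) < ninv w then 0 else if w = swap_pos L p then z * c else 0)"
    if "ninv (swap_pos L p) \<le> ninv w" for w
  proof (cases "distinct w \<and> desc w p")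
    case True
    have sp: "Suc p < length w" using True by (simp add: desc_def)
    have "ninv w = Suc (ninv (swap_pos w p))"
      using ninv_swap_asc[of p "swap_pos w p"] True sp by (simp add: desc_def nth_swap)
    moreover have "(swap_pos w p = L) = (w = swap_pos L p)"
      using sp by (metis length_swap swap_swap)
    ultimately show ?thesis using True that nL M0 M1[of "swap_pos w p"]
      by (simp add: rh_def ru_def M0)
  next
    case False
    then have "w \<noteq> swap_pos L p" using dsL by auto
    moreover have "ru b p M w = 0" using False unfolding ru_def by auto
    ultimately show ?thesis using that nL M0 by (simp add: rh_def)
  qed
  show ?thesis unfolding TOP_def using main dsL by auto
qed

lemma TOP_eind0: "TOP (eind n) [1..<Suc n] 1"
  by (auto simp: TOP_def eind_def)

definition Lf :: "nat \<Rightarrow> nat \<Rightarrow> nat \<Rightarrow> nat list" where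
  "Lf n q t = map (\<lambda>i. if i < q then n - i else if i < t then i - q + 1 else if i = t then n - q else i - q) [0..<n]"

lemma Lf_len[simp]: "length (Lf n q t) = n" by (simp add: Lf_def)

lemma Lf_nth: "i < n \<Longrightarrow> Lf n q t ! i = (if i < q then n - i else if i < t then i - q + 1 else if i = t then n - q else i - q)"
  by (simp add: Lf_def)

lemma Lf_swap: "q \<le> t \<Longrightarrow> Suc t < n \<Longrightarrow> swap_pos (Lf n q (Suc t)) t = Lf n q t"
  by (rule nth_equalityI) (auto simp: nth_swap Lf_nth)

lemma Lf_asc: "q \<le> t \<Longrightarrow> Suc t < n \<Longrightarrow> Lf n q (Suc t) ! t < Lf n q (Suc t) ! Suc t"
  by (auto simp: Lf_nth)

lemma chain_TOP:
  assumes "TOP M (Lf n q (n - 1)) c" "q \<le> t" "t \<le> n - 1"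
  shows "TOP (rw b (ch z t (n - 1)) M) (Lf n q t) (z ^ (n - 1 - t) * c)"
  using assms(2,3)
proof (induction "n - 1 - t" arbitrary: t)
  case 0
  then have "t = n - 1" by simp
  then show ?case using assms(1) by simp
next
  case (Suc d)
  then have t: "Suc t \<le> n - 1" "q \<le> Suc t" by auto
  have IH: "TOP (rw b (ch z (Suc t) (n - 1)) M) (Lf n q (Suc t)) (z ^ (n - 1 - Suc t) * c)"
    using Suc.hyps(1)[of "Suc t"] Suc.hyps(2) t by simp
  have tn: "Suc t < n" using t by simp
  have "TOP (rh b t z (rw b (ch z (Suc t) (n - 1)) M)) (swap_pos (Lf n q (Suc t)) t) (z * (z ^ (n - 1 - Suc t) * c))"
    by (rule TOP_step[OF IH]) (use tn Suc.prems Lf_asc[of q t n] in auto)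
  moreover have "z * (z ^ (n - 1 - Suc t) * c) = z ^ (n - 1 - t) * c"
    using Suc.hyps(2) by (metis Suc_diff_Suc diff_Suc_1 power_Suc mult.assoc t(1) Suc_le_lessD)
  ultimately show ?case
    using Lf_swap[OF Suc.prems(1) tn] ch_split[of t "n - 1" z] tn by (simp add: rw_snoc)
qed

lemma Lf_next: "q < n \<Longrightarrow> Lf n q q = Lf n (Suc q) (n - 1)"
  by (rule nth_equalityI) (auto simp: Lf_nth)

lemma Lf_0: "Lf n 0 (n - Suc 0) = [Suc 0..<Suc n]"
  by (rule nth_equalityI) (auto simp: Lf_nth)

lemma Lf_n: "Lf n n (n - Suc 0) = rev [Suc 0..<Suc n]"
  by (rule nth_equalityI) (auto simp: Lf_nth rev_nth)

lemma stair_TOP: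
  assumes "q \<le> n"
  shows "TOP (rw b (stair n zs [0..<q]) (eind n)) (Lf n q (n - 1)) (\<Prod>r<q. zs r ^ (n - 1 - r))"
  using assms
proof (induction q)
  case 0
  then show ?case using TOP_eind0 by (simp add: Lf_0 stair_def)
next
  case (Suc q)
  have "TOP (rw b (ch (zs q) q (n - 1)) (rw b (stair n zs [0..<q]) (eind n))) (Lf n q q) (zs q ^ (n - 1 - q) * (\<Prod>r<q. zs r ^ (n - 1 - r)))"
    by (rule chain_TOP) (use Suc in auto)
  then show ?case using Suc.prems by (simp add: Lf_next upt_Suc stair_append stair_single rw_append mult.commute)
qed

lemma Fm_top: "Fm b n zs (rev [Suc 0..<Suc n]) = (\<Prod>r<n. zs r ^ (n - 1 - r))"
  using stair_TOP[of n n b zs] by (simp add: TOP_def Fm_def Lf_n)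

lemma Fx_top: "Fx \<beta> n (rev [1..<Suc n]) = groth_top n"
proof -
  have "Fx \<beta> n (rev [1..<Suc n]) = (\<Prod>r<n. Xv (Suc r) ^ (n - 1 - r))"
    by (simp add: Fx_def Fm_top)
  also have "\<dots> = (\<Prod>i\<in>{1..<Suc n}. Xv i ^ (n - i))"
    by (rule prod.reindex_bij_witness[of _ "\<lambda>i. i - 1" Suc]) auto
  also have "\<dots> = (\<Prod>i\<in>{1..<n}. Xv i ^ (n - i))"
    by (cases n) (auto simp: prod.atLeastLessThan_Suc)
  finally show ?thesis by (simp add: groth_top_def)
qed


lemma first_ascent_props:
  assumes "has_ascent w"
  shows "Suc (first_ascent w) < length w \<and> w ! first_ascent w < w ! Suc (first_ascent w)"
  using assms unfolding has_ascent_def first_ascent_def by (rule LeastI_ex)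

lemma is_perm_swap: "is_perm w \<Longrightarrow> Suc p < length w \<Longrightarrow> is_perm (swap_pos w p)"
  by (simp add: is_perm_def)

lemma noasc_perm:
  assumes "is_perm w" "\<not> has_ascent w"
  shows "w = rev [Suc 0..<Suc (length w)]"
proof -
  have d: "distinct w" and s: "set w = {1..length w}" using assms(1) by (auto simp: is_perm_def)
  have step: "w ! Suc i < w ! i" if "Suc i < length w" for i
  proof -
    have "\<not> w ! i < w ! Suc i" using assms(2) that by (auto simp: has_ascent_def)
    moreover have "w ! i \<noteq> w ! Suc i" using d that nth_eq_iff_index_eq[OF d, of i "Suc i"] by auto
    ultimately show ?thesis by simp
  qed
  have "sorted_wrt (>) w"
    by (subst sorted_wrt_iff_nth_Suc_transp) (auto simp: transp_def step)
  then have "sorted_wrt (\<lambda>x y. y \<le> x) w" by (rule sorted_wrt_mono_rel[rotated]) auto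
  then have "sorted (rev w)" by (simp add: sorted_wrt_rev)
  moreover have "distinct (rev w)" using d by simp
  moreover have "set (rev w) = set [Suc 0..<Suc (length w)]" using s by (simp add: atLeastLessThanSuc_atLeastAtMost)
  ultimately have "rev w = [Suc 0..<Suc (length w)]"
    using sorted_distinct_set_unique[of "rev w" "[Suc 0..<Suc (length w)]"] by simp
  then show ?thesis by (metis rev_rev_ident)
qed

lemma Fx_noasc: assumes "is_perm w" "\<not> has_ascent w" shows "Fx \<beta> (length w) w = groth_top (length w)"
proof -
  obtain n where n: "n = length w" by simp
  then have "w = rev [Suc 0..<Suc n]" using noasc_perm[OF assms] by simp
  then show ?thesis using Fx_top[of \<beta> n] n by simp
qed

definition NP :: "nat \<Rightarrow> nat" where "NP n = card {(i,j). i < j \<and> j < (n::nat)}"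

lemma NP_le: "NP n \<le> n * n"
proof -
  have "NP n \<le> card ({..<n} \<times> {..<n})"
    unfolding NP_def by (rule card_mono) auto
  then show ?thesis by (simp add: card_cartesian_product)
qed

lemma groth_aux_Fx:
  "is_perm w \<Longrightarrow> NP (length w) \<le> ninv w + k \<Longrightarrow> groth_aux k \<beta> w = Fx \<beta> (length w) w"
proof (induction k arbitrary: w)
  case 0
  show ?case
  proof (cases "has_ascent w")
    case True
    note fa = first_ascent_props[OF True]
    have "ninv (swap_pos w (first_ascent w)) = Suc (ninv w)" using fa by (intro ninv_swap_asc) auto
    moreover have "ninv (swap_pos w (first_ascent w)) \<le> NP (length w)"
      using ninv_le[of "swap_pos w (first_ascent w)"] by (simp add: NP_def)
    ultimately show ?thesis using 0 by simp
  next
    case False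
    then show ?thesis using Fx_noasc[OF 0(1) False] by simp
  qed
next
  case (Suc k)
  show ?case
  proof (cases "has_ascent w")
    case True
    note fa = first_ascent_props[OF True]
    let ?f = "first_ascent w"
    let ?v = "swap_pos w ?f"
    have nv: "ninv ?v = Suc (ninv w)" using fa by (intro ninv_swap_asc) auto
    have pv: "is_perm ?v" using Suc.prems fa by (simp add: is_perm_swap)
    have IH: "groth_aux k \<beta> ?v = Fx \<beta> (length w) ?v"
      using Suc.IH[OF pv] Suc.prems nv by simp
    have dv: "distinct ?v" "desc ?v ?f" using pv fa by (auto simp: is_perm_def desc_def nth_swap)
    have "groth_aux (Suc k) \<beta> w = piop \<beta> (Suc ?f) (Fx \<beta> (length w) ?v)"
      using True IH by simp
    also have "\<dots> = Fx \<beta> (length w) (swap_pos ?v ?f)"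
      by (rule piop_Fx) (use fa dv in auto)
    also have "swap_pos ?v ?f = w" using fa by simp
    finally show ?thesis .
  next
    case False
    then show ?thesis using Fx_noasc[OF Suc.prems(1) False] by simp
  qed
qed

lemma groth_Fx: "is_perm w \<Longrightarrow> groth \<beta> w = Fx \<beta> (length w) w"
  unfolding groth_def using NP_le[of "length w"] by (intro groth_aux_Fx) auto

definition EE :: "real \<Rightarrow> nat \<Rightarrow> nat list \<Rightarrow> real" where
  "EE \<beta> n = Fm \<beta> n (\<lambda>_. 1)"

lemma eval_Fx: "eval_ones (Fx \<beta> n w) = EE \<beta> n w"
proof -
  have "eval_ones (Fx \<beta> n w) = Fm (eval_ones (BB \<beta>)) n (\<lambda>q. eval_ones (Xv (Suc q))) w"
    unfolding Fx_def by (rule Fm_hom) (auto simp: eval_ones_add eval_ones_mult eval_ones_zero eval_ones_one)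
  then show ?thesis by (simp add: EE_def BB_def eval_ones_single eval_ones_Xv)
qed

lemma Upsilon_EE: "is_perm w \<Longrightarrow> Upsilon \<beta> w = EE \<beta> (length w) w"
proof (cases "w = []")
  case True
  then show ?thesis by (simp add: Upsilon_def EE_def Fm_def stair_def eind_def)
next
  case False
  assume "is_perm w"
  then show ?thesis using False by (simp add: Upsilon_def groth_Fx eval_Fx)
qed


definition pos :: "nat list \<Rightarrow> nat \<Rightarrow> nat" where
  "pos w v = (LEAST j. j < length w \<and> w ! j = v)"

lemma pos_in: "v \<in> set w \<Longrightarrow> pos w v < length w \<and> w ! pos w v = v"
  unfolding pos_def by (rule LeastI_ex) (simp add: in_set_conv_nth)

lemma pos_nth: "distinct w \<Longrightarrow> k < length w \<Longrightarrow> pos w (w ! k) = k"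
  by (metis nth_eq_iff_index_eq nth_mem pos_in)

lemma pos_unique: "distinct w \<Longrightarrow> k < length w \<Longrightarrow> w ! k = v \<Longrightarrow> pos w v = k"
  using pos_nth by blast

definition vsw :: "nat \<Rightarrow> nat list \<Rightarrow> nat list" where
  "vsw i w = map (swp (Suc i)) w"

definition vdesc :: "nat list \<Rightarrow> nat \<Rightarrow> bool" where
  "vdesc w i = (Suc i \<in> set w \<and> Suc (Suc i) \<in> set w \<and> pos w (Suc (Suc i)) < pos w (Suc i))"

lemma vsw_len[simp]: "length (vsw i w) = length w" by (simp add: vsw_def)

lemma vsw_nth: "k < length w \<Longrightarrow> vsw i w ! k = swp (Suc i) (w ! k)" by (simp add: vsw_def)

lemma distinct_vsw[simp]: "distinct (vsw i w) = distinct w"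
  by (simp add: vsw_def distinct_map inj_on_def) (metis inj_swp injD)

lemma vsw_vsw[simp]: "vsw i (vsw i w) = w"
  by (simp add: vsw_def comp_def)

lemma in_set_vsw: "(v \<in> set (vsw i w)) = (swp (Suc i) v \<in> set w)"
  by (auto simp: vsw_def) (metis image_eqI swp_swp)

lemma vsw_swap: "Suc j < length w \<Longrightarrow> vsw i (swap_pos w j) = swap_pos (vsw i w) j"
  by (simp add: vsw_def swap_pos_def map_update)

lemma pos_swap: "distinct w \<Longrightarrow> Suc j < length w \<Longrightarrow> v \<in> set w \<Longrightarrow> pos (swap_pos w j) v = swp j (pos w v)"
  by (rule pos_unique) (auto simp: nth_swap_swp pos_in swp_less_len)

lemma pos_vsw: "distinct w \<Longrightarrow> v \<in> set (vsw i w) \<Longrightarrow> pos (vsw i w) v = pos w (swp (Suc i) v)"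
  by (rule pos_unique) (auto simp: vsw_nth pos_in in_set_vsw)

lemma swp_mono: "a \<noteq> b \<Longrightarrow> \<not> ({a, b} = {k, Suc k}) \<Longrightarrow> (swp k a < swp k b) = (a < b)"
  by (auto simp: swp_def doubleton_eq_iff)

lemma vdesc_swap_generic:
  assumes d: "distinct w" and j: "Suc j < length w" and ne: "{w ! j, w ! Suc j} \<noteq> {Suc i, Suc (Suc i)}"
  shows "vdesc (swap_pos w j) i = vdesc w i"
proof (cases "Suc i \<in> set w \<and> Suc (Suc i) \<in> set w")
  case True
  let ?a = "pos w (Suc (Suc i))" and ?b = "pos w (Suc i)"
  have pa: "?a < length w" "w ! ?a = Suc (Suc i)" and pb: "?b < length w" "w ! ?b = Suc i"
    using True pos_in by auto
  have "?a \<noteq> ?b" using pa pb by auto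
  moreover have "{?a, ?b} \<noteq> {j, Suc j}"
  proof
    assume "{?a, ?b} = {j, Suc j}"
    then have "{w ! ?a, w ! ?b} = {w ! j, w ! Suc j}" by (auto simp: doubleton_eq_iff)
    then show False using ne pa pb by (auto simp: doubleton_eq_iff)
  qed
  ultimately show ?thesis using True d j
    by (simp add: vdesc_def pos_swap swp_mono)
next
  case False
  then show ?thesis using j by (auto simp: vdesc_def)
qed

lemma desc_vsw_generic:
  assumes d: "distinct w" and j: "Suc j < length w" and ne: "{w ! j, w ! Suc j} \<noteq> {Suc i, Suc (Suc i)}"
  shows "desc (vsw i w) j = desc w j"
proof -
  have "w ! j \<noteq> w ! Suc j" using d j nth_eq_iff_index_eq[OF d, of j "Suc j"] by auto
  moreover have "{w ! Suc j, w ! j} \<noteq> {Suc i, Suc (Suc i)}" using ne by (auto simp: doubleton_eq_iff)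
  ultimately show ?thesis using j by (simp add: desc_def vsw_nth swp_mono)
qed

lemma special_case:
  assumes d: "distinct w" and j: "Suc j < length w" and eq: "{w ! j, w ! Suc j} = {Suc i, Suc (Suc i)}"
  shows "vsw i w = swap_pos w j" "vdesc w i = desc w j"
    "desc (vsw i w) j = (\<not> desc w j)" "vdesc (swap_pos w j) i = (\<not> vdesc w i)"
proof -
  have cases: "(w ! j = Suc i \<and> w ! Suc j = Suc (Suc i)) \<or> (w ! j = Suc (Suc i) \<and> w ! Suc j = Suc i)"
    using eq by (simp add: doubleton_eq_iff)
  have other: "w ! k \<noteq> Suc i \<and> w ! k \<noteq> Suc (Suc i)" if "k < length w" "k \<noteq> j" "k \<noteq> Suc j" for k
  proof -
    have "w ! k \<noteq> w ! j" "w ! k \<noteq> w ! Suc j"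
      using that j nth_eq_iff_index_eq[OF d, of k j] nth_eq_iff_index_eq[OF d, of k "Suc j"] by auto
    then show ?thesis using cases by auto
  qed
  show 1: "vsw i w = swap_pos w j"
  proof (rule nth_equalityI)
    fix k assume k: "k < length (vsw i w)"
    then have k': "k < length w" by simp
    show "vsw i w ! k = swap_pos w j ! k"
    proof (cases "k = j \<or> k = Suc j")
      case True
      then show ?thesis using cases k' j by (auto simp: vsw_nth nth_swap swp_def)
    next
      case False
      then show ?thesis using other[OF k'] k' j by (simp add: vsw_nth nth_swap swp_def)
    qed
  qed simp
  have m: "w ! j \<in> set w" "w ! Suc j \<in> set w" using j by auto
  have inS: "Suc i \<in> set w" "Suc (Suc i) \<in> set w"
    using cases m by auto
  have pj: "pos w (w ! j) = j" "pos w (w ! Suc j) = Suc j" using j d by (simp_all add: pos_nth)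
  show 2: "vdesc w i = desc w j"
    using cases pj j inS by (auto simp: vdesc_def desc_def)
  show "desc (vsw i w) j = (\<not> desc w j)"
    using cases j unfolding 1 by (auto simp: desc_def nth_swap)
  have d2: "distinct (swap_pos w j)" using d j by simp
  have s2: "swap_pos w j ! j = w ! Suc j" "swap_pos w j ! Suc j = w ! j" using j by (auto simp: nth_swap)
  have pj2: "pos (swap_pos w j) (w ! Suc j) = j" "pos (swap_pos w j) (w ! j) = Suc j"
    using pos_nth[OF d2, of j] pos_nth[OF d2, of "Suc j"] s2 j by simp_all
  show "vdesc (swap_pos w j) i = (\<not> vdesc w i)"
    using cases pj pj2 j inS unfolding 2 by (auto simp: vdesc_def desc_def)
qed

definition lu :: "'a::comm_ring_1 \<Rightarrow> nat \<Rightarrow> (nat list \<Rightarrow> 'a) \<Rightarrow> nat list \<Rightarrow> 'a" where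
  "lu b i M w = (if distinct w \<and> vdesc w i then M (vsw i w) + b * M w else 0)"

definition lh :: "'a::comm_ring_1 \<Rightarrow> nat \<Rightarrow> 'a \<Rightarrow> (nat list \<Rightarrow> 'a) \<Rightarrow> nat list \<Rightarrow> 'a" where
  "lh b i z M = (\<lambda>w. M w + z * lu b i M w)"

lemma lu_ru: "lu b i (ru b j M) w = ru b j (lu b i M) w"
proof (cases "distinct w \<and> Suc j < length w")
  case False
  then show ?thesis by (auto simp: lu_def ru_def desc_def)
next
  case True
  then have d: "distinct w" and j: "Suc j < length w" by auto
  show ?thesis
  proof (cases "{w ! j, w ! Suc j} = {Suc i, Suc (Suc i)}")
    case True
    note s = special_case[OF d j True]
    show ?thesis using d j s by (cases "desc w j") (simp_all add: lu_def ru_def vsw_swap)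
  next
    case False
    have v: "vdesc (swap_pos w j) i = vdesc w i" by (rule vdesc_swap_generic[OF d j False])
    have dd: "desc (vsw i w) j = desc w j" by (rule desc_vsw_generic[OF d j False])
    show ?thesis using d j v dd by (simp add: lu_def ru_def vsw_swap algebra_simps)
  qed
qed


lemma perm_inv_pos: "perm_inv w = map (\<lambda>k. Suc (pos w k)) [1..<Suc (length w)]"
  by (simp add: perm_inv_def pos_def)

lemma perm_inv_len[simp]: "length (perm_inv w) = length w"
  by (simp add: perm_inv_def)

lemma perm_inv_nth: "k < length w \<Longrightarrow> perm_inv w ! k = Suc (pos w (Suc k))"
  by (simp add: perm_inv_pos nth_map_upt del: upt_Suc)

lemma is_perm_mem: "is_perm w \<Longrightarrow> (v \<in> set w) = (1 \<le> v \<and> v \<le> length w)"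
  by (auto simp: is_perm_def)

lemma is_perm_nth: "is_perm w \<Longrightarrow> k < length w \<Longrightarrow> 1 \<le> w ! k \<and> w ! k \<le> length w"
  by (metis is_perm_mem nth_mem)

lemma perm_inv_nth_val: "is_perm w \<Longrightarrow> k < length w \<Longrightarrow> perm_inv w ! (w ! k - 1) = Suc k"
  using is_perm_nth[of w k] perm_inv_nth[of "w ! k - 1" w] pos_nth[of w k]
  by (auto simp: is_perm_def)

lemma perm_inv_is_perm: assumes "is_perm w" shows "is_perm (perm_inv w)"
proof -
  let ?n = "length w"
  have d: "distinct w" using assms by (simp add: is_perm_def)
  have pin: "pos w (Suc k) < ?n" if "k < ?n" for k using pos_in[of "Suc k" w] assms that
    by (simp add: is_perm_mem)
  have "distinct (perm_inv w)"
  proof (subst distinct_conv_nth, intro allI impI)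
    fix i j assume ij: "i < length (perm_inv w)" "j < length (perm_inv w)" "i \<noteq> j"
    have "Suc i \<in> set w" "Suc j \<in> set w" using ij assms by (auto simp: is_perm_mem)
    then have "pos w (Suc i) \<noteq> pos w (Suc j)" using ij pos_in by (metis Suc_inject)
    then show "perm_inv w ! i \<noteq> perm_inv w ! j" using ij by (simp add: perm_inv_nth)
  qed
  moreover have "set (perm_inv w) \<subseteq> {1..?n}"
    by (auto simp: in_set_conv_nth perm_inv_nth pin Suc_leI)
  ultimately have "set (perm_inv w) = {1..?n}"
    by (metis card_atLeastAtMost card_subset_eq diff_Suc_1 distinct_card finite_atLeastAtMost perm_inv_len)
  then show ?thesis using \<open>distinct (perm_inv w)\<close> by (simp add: is_perm_def)
qed

lemma perm_inv_inv: assumes "is_perm w" shows "perm_inv (perm_inv w) = w"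
proof (rule nth_equalityI)
  fix k assume k: "k < length (perm_inv (perm_inv w))"
  then have k': "k < length w" by simp
  have p: "is_perm (perm_inv w)" by (rule perm_inv_is_perm[OF assms])
  have v: "1 \<le> w ! k" "w ! k \<le> length w" using is_perm_nth[OF assms k'] by auto
  have "pos (perm_inv w) (Suc k) = w ! k - 1"
    using p v k' perm_inv_nth_val[OF assms k'] by (intro pos_unique) (auto simp: is_perm_def)
  then show "perm_inv (perm_inv w) ! k = w ! k" using k' v by (simp add: perm_inv_nth)
qed simp

lemma desc_perm_inv: assumes "is_perm w" shows "desc (perm_inv w) i = vdesc w i"
proof -
  have iff: "(Suc (Suc i) \<in> set w) = (Suc i < length w)" using assms by (auto simp: is_perm_mem)
  show ?thesis using assms iff
    by (auto simp: desc_def vdesc_def perm_inv_nth is_perm_mem)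
qed

lemma vsw_is_perm: assumes "is_perm w" "vdesc w i" shows "is_perm (vsw i w)"
proof -
  have i: "Suc (Suc i) \<le> length w" using assms by (auto simp: vdesc_def is_perm_mem)
  have "set (vsw i w) = swp (Suc i) ` set w" by (simp add: vsw_def)
  also have "\<dots> = swp (Suc i) ` {1..length w}" using assms(1) by (simp add: is_perm_def)
  also have "\<dots> = {1..length w}"
  proof -
    have sub: "swp (Suc i) x \<in> {1..length w}" if "x \<in> {1..length w}" for x
      using i that by (auto simp: swp_def)
    show ?thesis
    proof
      show "swp (Suc i) ` {1..length w} \<subseteq> {1..length w}" using sub by blast
      show "{1..length w} \<subseteq> swp (Suc i) ` {1..length w}"
        using sub by (metis image_eqI subsetI swp_swp)
    qed
  qed
  finally show ?thesis using assms by (simp add: is_perm_def)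
qed

lemma swp_Suc: "swp (Suc i) (Suc k) = Suc (swp i k)"
  by (simp add: swp_def)

lemma perm_inv_vsw: assumes "is_perm w" "vdesc w i"
  shows "perm_inv (vsw i w) = swap_pos (perm_inv w) i"
proof (rule nth_equalityI)
  have i: "Suc i < length w" using assms by (auto simp: vdesc_def is_perm_mem)
  have pv: "is_perm (vsw i w)" by (rule vsw_is_perm[OF assms])
  fix k assume "k < length (perm_inv (vsw i w))"
  then have k: "k < length w" by simp
  have "perm_inv (vsw i w) ! k = Suc (pos (vsw i w) (Suc k))" using k by (simp add: perm_inv_nth)
  also have "\<dots> = Suc (pos w (swp (Suc i) (Suc k)))"
    using pv k assms(1) by (subst pos_vsw) (auto simp: is_perm_def)
  also have "\<dots> = perm_inv w ! swp i k" using k i by (simp add: swp_Suc perm_inv_nth swp_less_len)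
  also have "\<dots> = swap_pos (perm_inv w) i ! k" using k i by (simp add: nth_swap_swp)
  finally show "perm_inv (vsw i w) ! k = swap_pos (perm_inv w) i ! k" .
qed simp

lemma iota_rh:
  assumes w: "is_perm w" and N: "\<forall>v. is_perm v \<and> length v = length w \<longrightarrow> N v = M (perm_inv v)"
  shows "rh b i z M (perm_inv w) = lh b i z N w"
proof -
  have pw: "is_perm (perm_inv w)" by (rule perm_inv_is_perm[OF w])
  have Nw: "N w = M (perm_inv w)" using N w by simp
  show ?thesis
  proof (cases "vdesc w i")
    case True
    have "N (vsw i w) = M (perm_inv (vsw i w))" using N vsw_is_perm[OF w True] by simp
    then show ?thesis using True w pw Nw
      by (simp add: rh_def lh_def ru_def lu_def desc_perm_inv perm_inv_vsw is_perm_def)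
  next
    case False
    then show ?thesis using w Nw by (simp add: rh_def lh_def ru_def lu_def desc_perm_inv)
  qed
qed

definition lw :: "'a::comm_ring_1 \<Rightarrow> (nat \<times> 'a) list \<Rightarrow> (nat list \<Rightarrow> 'a) \<Rightarrow> nat list \<Rightarrow> 'a" where
  "lw b ws M = foldl (\<lambda>N (j, z). lh b j z N) M ws"

lemma lw_Nil[simp]: "lw b [] M = M" by (simp add: lw_def)
lemma lw_Cons[simp]: "lw b ((j,z) # ws) M = lw b ws (lh b j z M)" by (simp add: lw_def)
lemma lw_snoc: "lw b (xs @ [(j,z)]) M = lh b j z (lw b xs M)" by (simp add: lw_def)

lemma iota_rw:
  assumes "is_perm w" "\<forall>v. is_perm v \<and> length v = length w \<longrightarrow> N v = M (perm_inv v)"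
  shows "rw b ws M (perm_inv w) = lw b ws N w"
  using assms(2)
proof (induction ws arbitrary: M N)
  case Nil
  then show ?case using assms(1) by simp
next
  case (Cons a ws)
  obtain j z where a: "a = (j, z)" by fastforce
  have "\<forall>v. is_perm v \<and> length v = length w \<longrightarrow> lh b j z N v = rh b j z M (perm_inv v)"
    using iota_rh Cons.prems by (metis perm_inv_len)
  then show ?case using Cons.IH[of "lh b j z N" "rh b j z M"] by (simp add: a)
qed

lemma lu_lin: "lu b j (\<lambda>v. f v + c * g v) w = lu b j f w + c * lu b j g w"
  by (simp add: lu_def algebra_simps)

lemma lh_rh: "lh b i z (rh b j y M) = rh b j y (lh b i z M)"
  by (rule ext) (simp add: lh_def rh_def lu_lin ru_lin lu_ru algebra_simps)

lemma lh_rw: "lh b i z (rw b ws M) = rw b ws (lh b i z M)"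
  by (induction ws arbitrary: M) (auto simp: lh_rh)

definition idl :: "nat \<Rightarrow> nat list" where "idl n = [Suc 0..<Suc n]"

lemma idl_len[simp]: "length (idl n) = n" by (simp add: idl_def)
lemma idl_nth: "k < n \<Longrightarrow> idl n ! k = Suc k" by (simp add: idl_def nth_upt del: upt_Suc)
lemma idl_distinct: "distinct (idl n)" by (simp add: idl_def)

lemma eind_idl: "eind n w = (if w = idl n then 1 else 0)"
  by (simp add: eind_def idl_def)

lemma idl_no_desc: "\<not> desc (idl n) j"
  by (auto simp: desc_def idl_nth)

lemma idl_no_vdesc: "\<not> vdesc (idl n) j"
proof
  assume a: "vdesc (idl n) j"
  then have m: "Suc (Suc j) \<le> n" by (auto simp: vdesc_def idl_def)
  have "pos (idl n) (Suc (Suc j)) = Suc j" "pos (idl n) (Suc j) = j"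
    using m by (auto intro!: pos_unique simp: idl_distinct idl_nth)
  then show False using a by (simp add: vdesc_def)
qed

lemma lu_e_ru: assumes "Suc j < n" shows "lu b j (eind n) w = ru b j (eind n) w"
proof -
  let ?s = "swap_pos (idl n) j"
  have sp: "distinct ?s" "desc ?s j" using assms by (auto simp: idl_distinct desc_def nth_swap idl_nth)
  have spec: "{idl n ! j, idl n ! Suc j} = {Suc j, Suc (Suc j)}" using assms by (simp add: idl_nth)
  have vs: "vsw j (idl n) = ?s" using special_case(1)[OF idl_distinct _ spec] assms by simp
  have vds: "vdesc ?s j"
  proof -
    have "?s ! j = Suc (Suc j)" "?s ! Suc j = Suc j" using assms by (auto simp: nth_swap idl_nth)
    then have "{?s ! j, ?s ! Suc j} = {Suc j, Suc (Suc j)}" by auto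
    then show ?thesis using special_case(2)[of ?s j j] sp assms by simp
  qed
  have r1: "swap_pos w j = idl n \<longleftrightarrow> w = ?s" if "Suc j < length w" for w
    using that by (metis length_swap swap_swap)
  have r2: "vsw j w = idl n \<longleftrightarrow> w = ?s" for w
    by (metis vs vsw_vsw)
  have sne: "?s \<noteq> idl n" using sp idl_no_desc[of n j] by metis
  have ls: "length ?s = n" by simp
  show ?thesis
  proof (cases "w = ?s")
    case True
    have "lu b j (eind n) w = 1" using True sp vds sne by (simp add: lu_def eind_idl vs[symmetric])
    moreover have "ru b j (eind n) w = 1" using True sp sne assms by (simp add: ru_def eind_idl)
    ultimately show ?thesis by simp
  next
    case False
    have "lu b j (eind n) w = 0"
    proof -
      have "eind n (vsw j w) = (0::'a)" using False r2 by (simp add: eind_idl)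
      moreover have "vdesc w j \<Longrightarrow> eind n w = (0::'a)" using idl_no_vdesc[of n j] by (auto simp: eind_idl)
      ultimately show ?thesis by (simp add: lu_def)
    qed
    moreover have "ru b j (eind n) w = 0"
    proof (cases "desc w j")
      case True
      then have "Suc j < length w" by (simp add: desc_def)
      then have "eind n (swap_pos w j) = (0::'a)" using False r1 by (simp add: eind_idl)
      moreover have "eind n w = (0::'a)" using True idl_no_desc[of n j] by (auto simp: eind_idl)
      ultimately show ?thesis by (simp add: ru_def)
    next
      case False
      then show ?thesis by (simp add: ru_def)
    qed
    ultimately show ?thesis by simp
  qed
qed

lemma lh_e: "Suc j < n \<Longrightarrow> lh b j z (eind n) = rh b j z (eind n)"
  by (rule ext) (simp add: lh_def rh_def lu_e_ru)

lemma lw_e: "\<forall>(j,z)\<in>set ws. Suc j < n \<Longrightarrow> lw b ws (eind n) = rw b (rev ws) (eind n)"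
proof (induction ws rule: rev_induct)
  case Nil
  then show ?case by simp
next
  case (snoc a ws)
  obtain j z where a: "a = (j, z)" by fastforce
  have j: "Suc j < n" using snoc.prems a by auto
  have "lw b (ws @ [a]) (eind n) = lh b j z (rw b (rev ws) (eind n))"
    using snoc by (simp add: a lw_snoc)
  also have "\<dots> = rw b (rev ws) (rh b j z (eind n))" by (simp add: lh_rw lh_e[OF j])
  finally show ?case by (simp add: a)
qed


definition rwp :: "'a::comm_ring_1 \<Rightarrow> nat list \<Rightarrow> (nat list \<Rightarrow> 'a) \<Rightarrow> nat list \<Rightarrow> 'a" where
  "rwp b js M = rw b (map (\<lambda>j. (j, 1)) js) M"

lemma rwp_Cons: "rwp b (j # js) M = rwp b js (rh b j 1 M)" by (simp add: rwp_def)
lemma rwp_append: "rwp b (xs @ ys) M = rwp b ys (rwp b xs M)" by (simp add: rwp_def rw_append)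

lemma not_far: "\<not> far a x \<Longrightarrow> x \<noteq> a \<Longrightarrow> x = Suc a \<or> a = Suc x"
  by (auto simp: far_def)

lemma CF:
  assumes "\<forall>c. filter (\<lambda>x. x = c) u = filter (\<lambda>x. x = c) v"
    and "\<forall>c. filter (\<lambda>x. x = c \<or> x = Suc c) u = filter (\<lambda>x. x = c \<or> x = Suc c) v"
  shows "rwp b u M = rwp b v M"
  using assms
proof (induction u arbitrary: v M)
  case Nil
  have "v = []"
  proof (rule ccontr)
    assume "v \<noteq> []"
    then have "filter (\<lambda>x. x = hd v) v \<noteq> []" by (cases v) auto
    then show False using Nil.prems(1)[rule_format, of "hd v"] by simp
  qed
  then show ?case by simp
next
  case (Cons a u)
  have e: "filter (\<lambda>x. x = a) v = a # filter (\<lambda>x. x = a) u" using Cons.prems(1)[rule_format, of a] by simp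
  have "a \<in> set (filter (\<lambda>x. x = a) v)" unfolding e by simp
  then have av: "a \<in> set v" by simp
  obtain v1 v2 where v: "v = v1 @ a # v2" and a1: "a \<notin> set v1" using split_list_first[OF av] by auto
  have farall: "far a x" if x: "x \<in> set v1" for x
  proof (rule ccontr)
    assume nf: "\<not> far a x"
    have xa: "x \<noteq> a" using x a1 by auto
    define c where "c = min a x"
    let ?P = "\<lambda>y. y = c \<or> y = Suc c"
    have Pa: "?P a" and Px: "?P x" using not_far[OF nf xa] by (auto simp: c_def)
    have ne: "filter ?P v1 \<noteq> []" using x Px by (auto simp: filter_empty_conv)
    have "hd (filter ?P v1) \<in> set (filter ?P v1)" using ne by (rule hd_in_set)
    then have "hd (filter ?P v1) \<in> set v1" by simp
    then have hne: "hd (filter ?P v1) \<noteq> a" using a1 by auto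
    have "filter ?P (a # u) = filter ?P v" using Cons.prems(2) by blast
    then have "a # filter ?P u = filter ?P v1 @ a # filter ?P v2" using Pa by (simp add: v)
    then have "hd (filter ?P v1) = a" using ne by (cases "filter ?P v1") auto
    then show False using hne by simp
  qed
  have c1: "filter (\<lambda>x. x = c) u = filter (\<lambda>x. x = c) (v1 @ v2)" for c
  proof (cases "a = c")
    case True
    have "filter (\<lambda>x. x = c) v1 = []" using a1 True by (auto simp: filter_empty_conv)
    then show ?thesis using Cons.prems(1)[rule_format, of c] True by (simp add: v)
  next
    case False
    then show ?thesis using Cons.prems(1)[rule_format, of c] by (simp add: v)
  qed
  have c2: "filter (\<lambda>x. x = c \<or> x = Suc c) u = filter (\<lambda>x. x = c \<or> x = Suc c) (v1 @ v2)" for c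
  proof (cases "a = c \<or> a = Suc c")
    case True
    have "filter (\<lambda>x. x = c \<or> x = Suc c) v1 = []"
    proof (rule ccontr)
      assume "filter (\<lambda>x. x = c \<or> x = Suc c) v1 \<noteq> []"
      then obtain y where y: "y \<in> set v1" "y = c \<or> y = Suc c" by (auto simp: filter_empty_conv)
      have "far a y" using farall y(1) .
      then show False using True y(2) by (auto simp: far_def)
    qed
    then show ?thesis using Cons.prems(2)[rule_format, of c] True by (auto simp: v)
  next
    case False
    then show ?thesis using Cons.prems(2)[rule_format, of c] by (simp add: v)
  qed
  have IH': "rwp b u (rh b a 1 M) = rwp b (v1 @ v2) (rh b a 1 M)"
    by (rule Cons.IH) (use c1 c2 in blast)+
  have far': "\<forall>(k,y)\<in>set (map (\<lambda>j. (j, 1::'a)) v1). far a k" using farall by auto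
  have sw: "rh b a 1 (rwp b v1 M) = rwp b v1 (rh b a 1 M)" unfolding rwp_def by (rule rw_far[OF far'])
  have "rwp b (a # u) M = rwp b (v1 @ v2) (rh b a 1 M)" unfolding rwp_Cons by (rule IH')
  also have "\<dots> = rwp b v2 (rwp b v1 (rh b a 1 M))" by (rule rwp_append)
  also have "\<dots> = rwp b v2 (rh b a 1 (rwp b v1 M))" by (simp only: sw)
  also have "\<dots> = rwp b v M" unfolding v rwp_append rwp_Cons ..
  finally show ?case .
qed

definition sp :: "nat \<Rightarrow> nat list" where
  "sp n = concat (map (\<lambda>q. rev [q..<n - 1]) [0..<n])"

lemma set_sp: "x \<in> set (sp n) \<Longrightarrow> x < n - 1"
  by (auto simp: sp_def)

lemma filter_eq_rep: "filter (\<lambda>x. x = c) xs = replicate (length (filter (\<lambda>x. x = c) xs)) c"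
  by (induction xs) auto

lemma single_pal: "rev (filter (\<lambda>x. x = c) xs) = filter (\<lambda>x. x = c) xs"
  by (metis filter_eq_rep rev_replicate)

lemma filter_upt_pair:
  "filter (\<lambda>x. x = c \<or> x = Suc c) [q..<m] = filter (\<lambda>x. q \<le> x \<and> x < m) [c, Suc c]"
proof (induction m)
  case 0
  then show ?case by simp
next
  case (Suc m)
  show ?case
  proof (cases "q \<le> m")
    case True
    then have "[q..<Suc m] = [q..<m] @ [m]" by (simp add: upt_Suc)
    then show ?thesis using Suc True by auto
  next
    case False
    then show ?thesis by (auto simp: upt_Suc)
  qed
qed

lemma concat_rep: "k \<le> Suc c \<Longrightarrow> Suc c < m \<Longrightarrow>
  concat (map (\<lambda>q. rev (filter (\<lambda>x. q \<le> x \<and> x < m) [c, Suc c])) [0..<k]) = concat (replicate k [Suc c, c])"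
proof (induction k)
  case 0
  then show ?case by simp
next
  case (Suc k)
  then show ?case by (simp add: upt_Suc replicate_append_same[symmetric])
qed

lemma pal_rep: "rev (concat (replicate k [x, y]) @ [x]) = concat (replicate k [x, y]) @ [x]"
proof (induction k)
  case 0
  then show ?case by simp
next
  case (Suc k)
  have "concat (replicate k [x, y]) @ [x, y] = [x, y] @ concat (replicate k [x, y])"
    by (induction k) auto
  then show ?case using Suc by simp
qed

lemma pair_pal: "rev (filter (\<lambda>x. x = c \<or> x = Suc c) (sp n)) = filter (\<lambda>x. x = c \<or> x = Suc c) (sp n)"
proof (cases "Suc c < n - 1")
  case False
  have "filter (\<lambda>x. x = c \<or> x = Suc c) (sp n) = filter (\<lambda>x. x = c) (sp n)"
    by (rule filter_cong) (use False set_sp in auto)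
  then show ?thesis by (simp add: single_pal)
next
  case True
  let ?m = "n - 1"
  let ?f = "\<lambda>q. rev (filter (\<lambda>x. q \<le> x \<and> x < ?m) [c, Suc c])"
  have "filter (\<lambda>x. x = c \<or> x = Suc c) (sp n) = concat (map ?f [0..<n])"
    by (simp add: sp_def filter_concat rev_filter[symmetric] filter_upt_pair comp_def)
  also have "[0..<n] = [0..<Suc c] @ [Suc c] @ [Suc (Suc c)..<n]"
  proof -
    have "[0..<n] = [0..<Suc c] @ [Suc c..<n]" using upt_add_eq_append[of 0 "Suc c" "n - Suc c"] True by simp
    moreover have "[Suc c..<n] = Suc c # [Suc (Suc c)..<n]" using True by (simp add: upt_rec)
    ultimately show ?thesis by simp
  qed
  also have "concat (map ?f ([0..<Suc c] @ [Suc c] @ [Suc (Suc c)..<n])) = concat (replicate (Suc c) [Suc c, c]) @ [Suc c]"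
  proof -
    have "concat (map ?f [0..<Suc c]) = concat (replicate (Suc c) [Suc c, c])"
      by (rule concat_rep) (use True in auto)
    moreover have "?f (Suc c) = [Suc c]" using True by simp
    moreover have "concat (map ?f [Suc (Suc c)..<n]) = []" by auto
    ultimately show ?thesis by simp
  qed
  finally show ?thesis by (simp only: pal_rep)
qed

lemma stair_ones: "stair n (\<lambda>_. (1::'a::one)) qs = map (\<lambda>j. (j, 1::'a)) (concat (map (\<lambda>q. rev [q..<n - 1]) qs))"
  by (induction qs) (auto simp: stair_def ch_def)

lemma EE_rwp: "EE \<beta> n = rwp \<beta> (sp n) (eind n)"
  by (simp add: EE_def Fm_def stair_ones rwp_def sp_def)

lemma perm_inv_idl: "perm_inv (idl n) = idl n"
proof (rule nth_equalityI)
  fix k assume "k < length (perm_inv (idl n))"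
  then have k: "k < n" by simp
  have "pos (idl n) (Suc k) = k" by (rule pos_unique) (use k in \<open>auto simp: idl_distinct idl_nth\<close>)
  then show "perm_inv (idl n) ! k = idl n ! k" using k by (simp add: perm_inv_nth idl_nth)
qed simp

lemma eind_inv: assumes "is_perm v" shows "eind (length v) (perm_inv v) = (eind (length v) v :: 'a::comm_ring_1)"
proof -
  have "(perm_inv v = idl (length v)) = (v = idl (length v))"
    by (metis assms perm_inv_idl perm_inv_inv)
  then show ?thesis by (simp add: eind_idl)
qed

lemma EE_sym: assumes "is_perm w" shows "EE \<beta> (length w) (perm_inv w) = EE \<beta> (length w) w"
proof -
  let ?n = "length w"
  let ?ws = "map (\<lambda>j. (j, 1::real)) (sp ?n)"
  have "EE \<beta> ?n (perm_inv w) = rw \<beta> ?ws (eind ?n) (perm_inv w)" by (simp add: EE_rwp rwp_def)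
  also have "\<dots> = lw \<beta> ?ws (eind ?n) w"
    by (rule iota_rw[OF assms]) (metis eind_inv)
  also have "\<dots> = rw \<beta> (rev ?ws) (eind ?n) w"
  proof -
    have "\<forall>(j,z)\<in>set ?ws. Suc j < ?n" using set_sp by fastforce
    then show ?thesis by (simp add: lw_e)
  qed
  also have "\<dots> = rwp \<beta> (rev (sp ?n)) (eind ?n) w" by (simp add: rwp_def rev_map)
  also have "rwp \<beta> (rev (sp ?n)) (eind ?n) = rwp \<beta> (sp ?n) (eind ?n)"
    by (rule CF) (simp_all add: rev_filter[symmetric] single_pal pair_pal)
  also have "rwp \<beta> (sp ?n) (eind ?n) w = EE \<beta> ?n w" by (simp add: EE_rwp)
  finally show ?thesis .
qed

lemma Upsilon_sym: "is_perm w \<Longrightarrow> Upsilon \<beta> (perm_inv w) = Upsilon \<beta> w"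
  using Upsilon_EE[of "perm_inv w" \<beta>] Upsilon_EE[of w \<beta>] EE_sym[of w \<beta>] perm_inv_is_perm[of w]
  by simp


definition rk :: "nat set \<Rightarrow> nat \<Rightarrow> nat" where "rk A x = card {y\<in>A. y \<le> x}"

lemma std_nth: "a < length u \<Longrightarrow> std u ! a = rk (set u) (u ! a)"
  by (simp add: std_def rk_def)

lemma std_len[simp]: "length (std u) = length u" by (simp add: std_def)

lemma rk_strict: assumes "finite A" "x \<in> A" "y \<in> A" "x < y" shows "rk A x < rk A y"
proof -
  have sub: "{z\<in>A. z \<le> x} \<subseteq> {z\<in>A. z \<le> y}" using assms by auto
  have "y \<in> {z\<in>A. z \<le> y}" "y \<notin> {z\<in>A. z \<le> x}" using assms by auto
  then have "{z\<in>A. z \<le> x} \<subset> {z\<in>A. z \<le> y}" using sub by blast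
  then show ?thesis unfolding rk_def by (rule psubset_card_mono[rotated]) (use assms in auto)
qed

lemma rk_inj: "finite A \<Longrightarrow> x \<in> A \<Longrightarrow> y \<in> A \<Longrightarrow> rk A x = rk A y \<Longrightarrow> x = y"
  by (metis linorder_neqE_nat less_irrefl rk_strict)

lemma rk_Suc: "rk (Suc ` A) (Suc x) = rk A x"
proof -
  have "{y \<in> Suc ` A. y \<le> Suc x} = Suc ` {y\<in>A. y \<le> x}" by auto
  then show ?thesis unfolding rk_def by (simp add: card_image)
qed

lemma rk_sorted:
  assumes s: "sorted_wrt (<) l" and k: "k < length l"
  shows "rk (set l) (l ! k) = Suc k"
proof -
  have d: "distinct l" using s by (simp add: strict_sorted_iff)
  have "{y \<in> set l. y \<le> l ! k} = set (take (Suc k) l)"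
  proof (intro equalityI subsetI)
    fix y assume "y \<in> {y \<in> set l. y \<le> l ! k}"
    then obtain j where j: "j < length l" "y = l ! j" "l ! j \<le> l ! k" by (auto simp: in_set_conv_nth)
    have "j \<le> k"
    proof (rule ccontr)
      assume "\<not> j \<le> k"
      then have "l ! k < l ! j" using s j k by (simp add: sorted_wrt_iff_nth_less)
      then show False using j by simp
    qed
    then show "y \<in> set (take (Suc k) l)" using j by (auto simp: in_set_conv_nth intro!: exI[of _ j])
  next
    fix y assume "y \<in> set (take (Suc k) l)"
    then obtain j where j: "j < Suc k" "j < length l" "y = l ! j" by (auto simp: in_set_conv_nth)
    have "l ! j \<le> l ! k" using s j k by (cases "j = k") (auto simp: sorted_wrt_iff_nth_less less_imp_le)
    then show "y \<in> {y \<in> set l. y \<le> l ! k}" using j by auto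
  qed
  moreover have "card (set (take (Suc k) l)) = Suc k" using d k by (simp add: distinct_card)
  ultimately show ?thesis by (simp add: rk_def)
qed

lemma std_is_perm: assumes d: "distinct u" shows "is_perm (std u)"
proof -
  let ?m = "length u"
  have fin: "finite (set u)" by simp
  have range: "std u ! a \<in> {1..?m}" if "a < ?m" for a
  proof -
    have "u ! a \<in> {y \<in> set u. y \<le> u ! a}" using that by auto
    then have ne: "{y \<in> set u. y \<le> u ! a} \<noteq> {}" by blast
    have "0 < card {y \<in> set u. y \<le> u ! a}" using ne by (simp add: card_gt_0_iff)
    then have "1 \<le> rk (set u) (u ! a)" unfolding rk_def by simp
    moreover have "rk (set u) (u ! a) \<le> card (set u)" unfolding rk_def by (rule card_mono) auto
    ultimately show ?thesis using that d by (simp add: std_nth distinct_card)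
  qed
  have dist: "distinct (std u)"
  proof (subst distinct_conv_nth, intro allI impI)
    fix a b assume ab: "a < length (std u)" "b < length (std u)" "a \<noteq> b"
    then have "u ! a \<noteq> u ! b" using d by (simp add: nth_eq_iff_index_eq)
    then have "rk (set u) (u ! a) \<noteq> rk (set u) (u ! b)" using rk_inj[OF fin] ab by auto
    then show "std u ! a \<noteq> std u ! b" using ab by (simp add: std_nth)
  qed
  have sub: "set (std u) \<subseteq> {1..?m}" using range by (auto simp: in_set_conv_nth)
  have "set (std u) = {1..?m}"
    by (rule card_subset_eq[OF finite_atLeastAtMost sub]) (simp add: distinct_card[OF dist])
  then show ?thesis using dist by (simp add: is_perm_def)
qed

definition enum :: "nat set \<Rightarrow> nat \<Rightarrow> nat list" where
  "enum S n = filter (\<lambda>i. i \<in> S) [0..<n]"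

lemma enum_sorted: "sorted_wrt (<) (enum S n)"
  by (simp add: enum_def sorted_wrt_filter)

lemma set_enum: "set (enum S n) = S \<inter> {..<n}"
  by (auto simp: enum_def)

lemma nths_enum: "nths xs S = map (\<lambda>i. xs ! i) (enum S (length xs))"
proof -
  have z: "zip xs [0..<length xs] = map (\<lambda>i. (xs ! i, i)) [0..<length xs]"
    by (rule nth_equalityI) auto
  show ?thesis by (simp add: nths_def z filter_map comp_def enum_def)
qed

lemma key_lemma:
  assumes w: "is_perm w" and S: "S \<subseteq> {..<length w}"
  shows "std (nths (perm_inv w) ((\<lambda>i. w ! i - 1) ` S)) = perm_inv (std (nths w S))"
proof -
  let ?n = "length w"
  let ?h = "\<lambda>i. w ! i - 1"
  let ?T = "?h ` S"
  define e where "e = enum S ?n"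
  define f where "f = enum ?T ?n"
  define u where "u = nths w S"
  define u' where "u' = nths (perm_inv w) ?T"
  have dw: "distinct w" using w by (simp add: is_perm_def)
  have wv: "1 \<le> w ! i \<and> w ! i \<le> ?n" if "i < ?n" for i using is_perm_nth[OF w that] .
  have T: "?T \<subseteq> {..<?n}" using S wv by fastforce
  have se: "set e = S" using S by (auto simp: e_def set_enum)
  have sf: "set f = ?T" using T by (auto simp: f_def set_enum)
  have u: "u = map (\<lambda>i. w ! i) e" by (simp add: u_def e_def nths_enum)
  have u': "u' = map (\<lambda>t. perm_inv w ! t) f" by (simp add: u'_def f_def nths_enum)
  have de: "distinct e" "sorted_wrt (<) e" using enum_sorted[of S ?n] by (auto simp: e_def strict_sorted_iff)
  have df: "distinct f" "sorted_wrt (<) f" using enum_sorted[of ?T ?n] by (auto simp: f_def strict_sorted_iff)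
  have injh: "inj_on ?h S"
  proof
    fix x y
    assume xy: "x \<in> S" "y \<in> S" "?h x = ?h y"
    have "x < ?n" "y < ?n" using xy S by auto
    then have "w ! x = w ! y" using wv[of x] wv[of y] xy(3) by linarith
    then show "x = y" using nth_eq_iff_index_eq[OF dw] \<open>x < ?n\<close> \<open>y < ?n\<close> by blast
  qed
  define m where "m = length e"
  have me: "m = card S" unfolding m_def se[symmetric] using de(1) by (simp add: distinct_card)
  have mf: "length f = m"
  proof -
    have "length f = card (set f)" using df(1) by (simp add: distinct_card)
    also have "\<dots> = card S" unfolding sf by (rule card_image[OF injh])
    finally show ?thesis using me by simp
  qed
  have du: "distinct u" using dw by (simp add: u_def)
  have lu: "length u = m" by (simp add: u m_def)
  have setu: "set u = Suc ` ?T"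
  proof -
    have "set u = (\<lambda>i. w ! i) ` S" by (simp add: u se)
    also have "\<dots> = Suc ` ?T" unfolding image_image
      by (rule image_cong[OF refl]) (use S wv in force)
    finally show ?thesis .
  qed
  have pu: "is_perm (std u)" by (rule std_is_perm[OF du])
  have finu: "finite (set u)" by simp
  define \<alpha> where "\<alpha> b = pos (std u) (Suc b)" for b
  have alpha: "\<alpha> b < m \<and> std u ! \<alpha> b = Suc b" if "b < m" for b
    using pos_in[of "Suc b" "std u"] pu that lu by (auto simp: \<alpha>_def is_perm_mem)
  have claim: "u ! \<alpha> b = Suc (f ! b)" if b: "b < m" for b
  proof -
    have r1: "rk (set u) (u ! \<alpha> b) = Suc b" using alpha[OF b] lu std_nth[of "\<alpha> b" u] by simp
    have r2: "rk (set u) (Suc (f ! b)) = Suc b" using rk_sorted[OF df(2), of b] b mf setu sf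
      by (simp add: rk_Suc)
    have m1: "u ! \<alpha> b \<in> set u" using alpha[OF b] lu by simp
    have m2: "Suc (f ! b) \<in> set u" using setu sf b mf by (metis image_eqI nth_mem)
    show ?thesis using rk_inj[OF finu m1 m2] r1 r2 by simp
  qed
  have lu': "length u' = m" by (simp add: u' mf)
  have setu': "set u' = Suc ` S"
  proof -
    have "set u' = (\<lambda>t. perm_inv w ! t) ` ?T" by (simp add: u' sf)
    also have "\<dots> = Suc ` S"
    proof -
      have "perm_inv w ! ?h i = Suc i" if "i \<in> S" for i using perm_inv_nth_val[OF w] S that by auto
      then show ?thesis unfolding image_image by (rule image_cong[OF refl])
    qed
    finally show ?thesis .
  qed
  show ?thesis
  proof (rule nth_equalityI)
    show "length (std (nths (perm_inv w) ?T)) = length (perm_inv (std (nths w S)))" using lu lu' by (simp add: u_def u'_def)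
  next
    fix b assume "b < length (std (nths (perm_inv w) ?T))"
    then have b: "b < m" using lu' by (simp add: u'_def)
    have fb: "f ! b < ?n" using sf T b mf by (metis lessThan_iff nth_mem subsetD)
    have "u' ! b = Suc (pos w (Suc (f ! b)))" using b mf fb by (simp add: u' perm_inv_nth)
    also have "pos w (Suc (f ! b)) = e ! \<alpha> b"
    proof (rule pos_unique[OF dw])
      have "e ! \<alpha> b \<in> S" using alpha[OF b] se m_def by (metis nth_mem)
      then show "e ! \<alpha> b < ?n" using S by auto
      show "w ! (e ! \<alpha> b) = Suc (f ! b)" using claim[OF b] alpha[OF b] by (simp add: u m_def)
    qed
    finally have u'b: "u' ! b = Suc (e ! \<alpha> b)" .
    have "std u' ! b = rk (set u') (u' ! b)" using b lu' by (simp add: std_nth)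
    also have "\<dots> = rk (set e) (e ! \<alpha> b)" by (simp add: u'b setu' se rk_Suc)
    also have "\<dots> = Suc (\<alpha> b)" using rk_sorted[OF de(2)] alpha[OF b] by (simp add: m_def)
    also have "\<dots> = perm_inv (std u) ! b" using b lu by (simp add: perm_inv_nth \<alpha>_def)
    finally show "std (nths (perm_inv w) ?T) ! b = perm_inv (std (nths w S)) ! b" by (simp add: u_def u'_def)
  qed
qed


theorem mainTheorem4:
  fixes w :: "nat list" and \<beta> :: real
  assumes "is_perm w"
  shows "cw \<beta> w = cw \<beta> (perm_inv w)"
proof -
  let ?n = "length w"
  let ?h = "\<lambda>i. w ! i - 1"
  have w: "is_perm w" by (rule assms)
  have dw: "distinct w" using w by (simp add: is_perm_def)
  have wv: "1 \<le> w ! i \<and> w ! i \<le> ?n" if "i < ?n" for i using is_perm_nth[OF w that] .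
  have injh: "inj_on ?h {..<?n}"
  proof
    fix x y
    assume xy: "x \<in> {..<?n}" "y \<in> {..<?n}" "?h x = ?h y"
    have "x < ?n" "y < ?n" using xy by auto
    then have "w ! x = w ! y" using wv[of x] wv[of y] xy(3) by linarith
    then show "x = y" using nth_eq_iff_index_eq[OF dw] \<open>x < ?n\<close> \<open>y < ?n\<close> by blast
  qed
  have imh: "?h ` {..<?n} = {..<?n}"
  proof
    show "?h ` {..<?n} \<subseteq> {..<?n}" using wv by force
    show "{..<?n} \<subseteq> ?h ` {..<?n}"
    proof
      fix t assume t: "t \<in> {..<?n}"
      then have "Suc t \<in> set w" using w by (auto simp: is_perm_mem)
      then obtain i where i: "i < ?n" "w ! i = Suc t" by (auto simp: in_set_conv_nth)
      then show "t \<in> ?h ` {..<?n}" by force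
    qed
  qed
  have bij: "bij_betw (image ?h) (Pow {..<?n}) (Pow {..<?n})"
    by (rule bij_betw_image_Pow) (unfold bij_betw_def, use injh imh in blast)
  let ?g = "\<lambda>T. (-1) ^ (?n - card T) * Upsilon \<beta> (std (nths (perm_inv w) T))"
  have "cw \<beta> (perm_inv w) = sum ?g (Pow {..<?n})" by (simp add: cw_def)
  also have "\<dots> = (\<Sum>S\<in>Pow {..<?n}. ?g (?h ` S))"
    by (rule sum.reindex_bij_betw[OF bij, symmetric])
  also have "\<dots> = (\<Sum>S\<in>Pow {..<?n}. (-1) ^ (?n - card S) * Upsilon \<beta> (std (nths w S)))"
  proof (rule sum.cong[OF refl])
    fix S assume S: "S \<in> Pow {..<?n}"
    then have S': "S \<subseteq> {..<?n}" by simp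
    have "card (?h ` S) = card S" by (rule card_image) (rule inj_on_subset[OF injh S'])
    moreover have "std (nths (perm_inv w) (?h ` S)) = perm_inv (std (nths w S))"
      by (rule key_lemma[OF w S'])
    moreover have "Upsilon \<beta> (perm_inv (std (nths w S))) = Upsilon \<beta> (std (nths w S))"
      by (rule Upsilon_sym[OF std_is_perm]) (simp add: dw)
    ultimately show "?g (?h ` S) = (-1) ^ (?n - card S) * Upsilon \<beta> (std (nths w S))" by simp
  qed
  also have "\<dots> = cw \<beta> w" by (simp add: cw_def)
  finally show ?thesis by simp
qed


end
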